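(* Let $\mathcal I=(\Omega,\mathbb P,\mathcal S,\mathcal T,Y)$ be an information structure that satisfies $\delta$-approximate rectangle substitutes, and let $\epsilon=\mathbb E[(\mu_\sigma-\mu_\tau)^2]$. Then $\mathbb E[(\mu_{\sigma\tau}-\mu_\tau)^2]\le 6\epsilon^{1/3}+\delta$.
   Context: An information structure is a tuple $\mathcal I=(\Omega,\mathbb P,\mathcal S,\mathcal T,Y)$: a probability space $(\Omega,\mathbb P)$, random variables $\sigma:\Omega\to\mathcal S$ (Alice's signal), $\tau:\Omega\to\mathcal T$ (Bob's signal), and $Y:\Omega\to[0,1]$. Notation: $\mu_{\sigma\tau}=\mathbb E[Y\mid\sigma,\tau]$, $\mu_\sigma=\mathbb E[Y\mid\sigma]$, $\mu_\tau=\mathbb E[Y\mid\tau]$; for measurable $S\subseteq\mathcal S$, $T\subseteq\mathcal T$: $\mu_{\sigma T}=\mathbb E[Y\mid\sigma,\tau\in T]$, $\mu_{S\tau}=\mathbb E[Y\mid\sigma\in S,\tau]$, $\mu_{ST}=\mathbb E[Y\mid\sigma\in S,\tau\in T]$. $\mathcal I$ satisfies $\delta$-approximate rectangle substitutes if for every partition of $\mathcal S\times\mathcal T$ into (measurable) rectangles, writing $S_{\sigma,\tau}\times T_{\sigma,\tau}$ for the rectangle containing $(\sigma,\tau)$, $\mathbb E[(\mu_{\sigma\tau}-\mu_{S_{\sigma,\tau}\tau})^2]\le\mathbb E[(\mu_{\sigma T_{\sigma,\tau}}-\mu_{S_{\sigma,\tau}T_{\sigma,\tau}})^2]+\delta$.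 *)

theory Defs
  imports "HOL-Probability.Probability"
begin

definition info_structure ::
  "'a measure \<Rightarrow> 's measure \<Rightarrow> 't measure \<Rightarrow> ('a \<Rightarrow> 's) \<Rightarrow> ('a \<Rightarrow> 't) \<Rightarrow> ('a \<Rightarrow> real) \<Rightarrow> bool" where
  "info_structure M Ms Mt sg tu Y \<longleftrightarrow>
     prob_space M \<and> sg \<in> M \<rightarrow>\<^sub>M Ms \<and> tu \<in> M \<rightarrow>\<^sub>M Mt \<and> Y \<in> borel_measurable M \<and>
     (\<forall>\<omega>\<in>space M. 0 \<le> Y \<omega> \<and> Y \<omega> \<le> 1)"

definition preimgs :: "'a measure \<Rightarrow> ('a \<Rightarrow> 'b) \<Rightarrow> 'b measure \<Rightarrow> 'a set set" where
  "preimgs M f N = {f -` A \<inter> space M | A. A \<in> sets N}"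

definition sig_gen :: "'a measure \<Rightarrow> 'a set set \<Rightarrow> 'a measure" where
  "sig_gen M G = sigma (space M) G"

definition mu_st :: "'a measure \<Rightarrow> 's measure \<Rightarrow> 't measure \<Rightarrow> ('a \<Rightarrow> 's) \<Rightarrow> ('a \<Rightarrow> 't) \<Rightarrow> ('a \<Rightarrow> real) \<Rightarrow> 'a \<Rightarrow> real" where
  "mu_st M Ms Mt sg tu Y = real_cond_exp M (sig_gen M (preimgs M sg Ms \<union> preimgs M tu Mt)) Y"

definition mu_s :: "'a measure \<Rightarrow> 's measure \<Rightarrow> ('a \<Rightarrow> 's) \<Rightarrow> ('a \<Rightarrow> real) \<Rightarrow> 'a \<Rightarrow> real" where
  "mu_s M Ms sg Y = real_cond_exp M (sig_gen M (preimgs M sg Ms)) Y"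

text \<open>mu_{sigma T} = E[Y | sigma, tau \<in> T]: conditional expectation given sigma and the event
  {tau \<in> T}; on the event {tau \<in> T} its value is E[Y | sigma, tau \<in> T].\<close>
definition mu_sT :: "'a measure \<Rightarrow> 's measure \<Rightarrow> ('a \<Rightarrow> 's) \<Rightarrow> ('a \<Rightarrow> 't) \<Rightarrow> ('a \<Rightarrow> real) \<Rightarrow> 't set \<Rightarrow> 'a \<Rightarrow> real" where
  "mu_sT M Ms sg tu Y T = real_cond_exp M (sig_gen M (preimgs M sg Ms \<union> {tu -` T \<inter> space M})) Y"

definition rect_event :: "'a measure \<Rightarrow> ('a \<Rightarrow> 's) \<Rightarrow> ('a \<Rightarrow> 't) \<Rightarrow> 's set \<Rightarrow> 't set \<Rightarrow> 'a set" where
  "rect_event M sg tu S T = {\<omega>\<in>space M. sg \<omega> \<in> S \<and> tu \<omega> \<in> T}"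

definition mu_ST :: "'a measure \<Rightarrow> ('a \<Rightarrow> 's) \<Rightarrow> ('a \<Rightarrow> 't) \<Rightarrow> ('a \<Rightarrow> real) \<Rightarrow> 's set \<Rightarrow> 't set \<Rightarrow> real" where
  "mu_ST M sg tu Y S T =
     (\<integral>\<omega>. indicator (rect_event M sg tu S T) \<omega> * Y \<omega> \<partial>M) / measure M (rect_event M sg tu S T)"

text \<open>delta-approximate rectangle substitutes, quantifying over all countable partitions of
  S x T into measurable rectangles A i x B i (empty rectangles allowed, so finite partitions
  are included).\<close>
definition approx_rect_subst ::
  "'a measure \<Rightarrow> 's measure \<Rightarrow> 't measure \<Rightarrow> ('a \<Rightarrow> 's) \<Rightarrow> ('a \<Rightarrow> 't) \<Rightarrow> ('a \<Rightarrow> real) \<Rightarrow> real \<Rightarrow> bool" where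
  "approx_rect_subst M Ms Mt sg tu Y \<delta> \<longleftrightarrow>
    (\<forall>(A :: nat \<Rightarrow> 's set) (B :: nat \<Rightarrow> 't set).
       (\<forall>i. A i \<in> sets Ms \<and> B i \<in> sets Mt) \<and>
       disjoint_family (\<lambda>i. A i \<times> B i) \<and>
       (\<Union>i. A i \<times> B i) = space Ms \<times> space Mt \<longrightarrow>
       (\<Sum>i. \<integral>\<omega>. indicator (rect_event M sg tu (A i) (B i)) \<omega> *
                   (mu_st M Ms Mt sg tu Y \<omega> - mu_sT M Mt tu sg Y (A i) \<omega>)\<^sup>2 \<partial>M)
       \<le> (\<Sum>i. \<integral>\<omega>. indicator (rect_event M sg tu (A i) (B i)) \<omega> *
                   (mu_sT M Ms sg tu Y (B i) \<omega> - mu_ST M sg tu Y (A i) (B i))\<^sup>2 \<partial>M) + \<delta>)"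

end

theory Submission
  imports Defs
begin

lemma ratio_rep:
  assumes M: "prob_space M" and subF: "subalgebra M F" and Ym[measurable]: "Y \<in> borel_measurable M"
    and Yb: "\<And>x. x\<in>space M \<Longrightarrow> 0 \<le> Y x \<and> Y x \<le> 1" and X[measurable]: "X \<in> sets M"
    and C: "C \<in> sets F"
  defines "f \<equiv> \<lambda>x. max 0 (min 1 (real_cond_exp M F (\<lambda>x. indicator X x * Y x) x / real_cond_exp M F (indicator X) x))"
  shows "(\<integral>x. indicator C x * indicator X x * f x \<partial>M) = (\<integral>x. indicator C x * indicator X x * Y x \<partial>M)"
proof -
  interpret prob_space M by fact
  interpret finite_measure_subalgebra M F by unfold_locales (rule subF)
  have CM[measurable]: "C \<in> sets M" using C subF by (auto simp: subalgebra_def)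
  have [measurable]: "C \<in> sets F" by fact
  define p where "p = real_cond_exp M F (indicator X)"
  define q where "q = real_cond_exp M F (\<lambda>x. indicator X x * Y x)"
  have fm[measurable]: "f \<in> borel_measurable F" unfolding f_def by measurable
  have fmM[measurable]: "f \<in> borel_measurable M" using fm subF measurable_from_subalg by blast
  have fb: "0 \<le> f x \<and> f x \<le> 1" for x unfolding f_def by auto
  have iX: "integrable M (indicator X :: 'a \<Rightarrow> real)"
    by (rule integrable_const_bound[where B=1]) auto
  have iXY: "integrable M (\<lambda>x. indicator X x * Y x)"
    by (rule integrable_const_bound[where B=1]) (auto simp: Yb abs_le_iff indicator_def)
  have "(\<integral>x. (indicator C x * f x) * p x \<partial>M) = (\<integral>x. (indicator C x * f x) * indicator X x \<partial>M)"
    unfolding p_def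
    by (rule real_cond_exp_intg) (auto intro!: integrable_const_bound[where B=1] simp: fb abs_le_iff indicator_def)
  moreover have "AE x in M. (indicator C x * f x) * p x = indicator C x * q x"
  proof -
    have "AE x in M. 0 \<le> q x" unfolding q_def by (rule real_cond_exp_pos) (auto simp: Yb)
    moreover have "AE x in M. q x \<le> p x" unfolding q_def p_def
      by (rule real_cond_exp_mono[OF _ iXY iX]) (auto simp: Yb indicator_def)
    ultimately show ?thesis
    proof eventually_elim
      case (elim x)
      show ?case
      proof (cases "p x = 0")
        case True then show ?thesis using elim by simp
      next
        case False
        then have "0 \<le> q x / p x" "q x / p x \<le> 1" using elim by (auto simp: divide_le_eq_1)
        then have "f x = q x / p x" unfolding f_def p_def q_def by auto
        then show ?thesis using False by simp
      qed
    qed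
  qed
  then have "(\<integral>x. (indicator C x * f x) * p x \<partial>M) = (\<integral>x. indicator C x * q x \<partial>M)"
    by (intro integral_cong_AE) (auto simp: p_def q_def)
  moreover have "(\<integral>x. indicator C x * q x \<partial>M) = (\<integral>x. indicator C x * (indicator X x * Y x) \<partial>M)"
    unfolding q_def
    by (rule real_cond_exp_intg) (auto intro!: integrable_const_bound[where B=1] simp: Yb abs_le_iff indicator_def)
  ultimately show ?thesis by (simp add: mult_ac)
qed


lemma sigma_sets_split:
  assumes S: "sigma_algebra \<Omega> S" and E: "E \<subseteq> \<Omega>"
  shows "sigma_sets \<Omega> (S \<union> {E}) \<subseteq> {A. \<exists>C\<in>S. \<exists>D\<in>S. A = (C \<inter> E) \<union> (D - E)}"
proof
  interpret sigma_algebra \<Omega> S by fact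
  fix a assume "a \<in> sigma_sets \<Omega> (S \<union> {E})"
  then show "a \<in> {A. \<exists>C\<in>S. \<exists>D\<in>S. A = (C \<inter> E) \<union> (D - E)}"
  proof (induction rule: sigma_sets.induct)
    case (Basic a)
    then show ?case
    proof
      assume "a \<in> S" then show ?thesis by (intro CollectI bexI[of _ a]) auto
    next
      assume "a \<in> {E}" then show ?thesis using E
        by (intro CollectI bexI[of _ \<Omega>] bexI[of _ "{}"]) auto
    qed
  next
    case Empty
    then show ?case by (intro CollectI bexI[of _ "{}"]) auto
  next
    case (Compl a)
    then obtain C D where CD: "C \<in> S" "D \<in> S" "a = (C \<inter> E) \<union> (D - E)" by auto
    have "\<Omega> - a = ((\<Omega> - C) \<inter> E) \<union> ((\<Omega> - D) - E)" using CD E by auto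
    moreover have "\<Omega> - C \<in> S" "\<Omega> - D \<in> S" using CD by auto
    ultimately show ?case by blast
  next
    case (Union a)
    then have "\<forall>i. \<exists>C\<in>S. \<exists>D\<in>S. a i = (C \<inter> E) \<union> (D - E)" by auto
    then obtain C D where CD: "\<And>i. C i \<in> S" "\<And>i. D i \<in> S" "\<And>i. a i = (C i \<inter> E) \<union> (D i - E)"
      by metis
    have "(\<Union>i. a i) = ((\<Union>i. C i) \<inter> E) \<union> ((\<Union>i. D i) - E)" using CD by auto
    moreover have "(\<Union>i. C i) \<in> S" "(\<Union>i. D i) \<in> S" using CD by auto
    ultimately show ?case by blast
  qed
qed

lemma subalg_sigma_ins:
  assumes subF: "subalgebra M F" and E: "E \<in> sets M"
  shows "subalgebra M (sigma (space M) (sets F \<union> {E}))" "subalgebra (sigma (space M) (sets F \<union> {E})) F"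
proof -
  have sub: "sets F \<union> {E} \<subseteq> Pow (space M)" using subF E sets.sets_into_space
    by (auto simp: subalgebra_def dest: sets.sets_into_space)
  have sM: "sets F \<union> {E} \<subseteq> sets M" using subF E by (auto simp: subalgebra_def)
  show "subalgebra M (sigma (space M) (sets F \<union> {E}))"
    unfolding subalgebra_def using sub sM
    by (auto simp: sets.sigma_sets_subset)
  show "subalgebra (sigma (space M) (sets F \<union> {E})) F"
    unfolding subalgebra_def using sub subF by (auto simp: subalgebra_def)
qed

lemma cond_exp_rep:
  assumes M: "prob_space M" and subF: "subalgebra M F" and Ym[measurable]: "Y \<in> borel_measurable M"
    and Yb: "\<And>x. x\<in>space M \<Longrightarrow> 0 \<le> Y x \<and> Y x \<le> 1" and E[measurable]: "E \<in> sets M"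
  shows "\<exists>f \<in> borel_measurable F. (\<forall>x. 0 \<le> f x \<and> f x \<le> 1) \<and>
     (AE x in M. x \<in> E \<longrightarrow> real_cond_exp M (sigma (space M) (sets F \<union> {E})) Y x = f x)"
proof -
  interpret prob_space M by fact
  define F' where "F' = sigma (space M) (sets F \<union> {E})"
  have subF': "subalgebra M F'" "subalgebra F' F" unfolding F'_def using subalg_sigma_ins[OF subF E] by auto
  interpret F': finite_measure_subalgebra M F' by unfold_locales (rule subF')
  define g where "g X = (\<lambda>x. max 0 (min 1 (real_cond_exp M F (\<lambda>x. indicator X x * Y x) x / real_cond_exp M F (indicator X) x)))" for X
  have gF[measurable]: "g X \<in> borel_measurable F" for X unfolding g_def by measurable
  have gM[measurable]: "g X \<in> borel_measurable M" for X using gF subF measurable_from_subalg by blast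
  have gF': "g X \<in> borel_measurable F'" for X using gF subF' measurable_from_subalg by blast
  have gb: "0 \<le> g X x \<and> g X x \<le> 1" for X x unfolding g_def by auto
  have sF': "sets F' = sigma_sets (space M) (sets F \<union> {E})" unfolding F'_def
    using subF sets.sets_into_space[OF E] by (intro sets_measure_of) (auto simp: subalgebra_def dest: sets.sets_into_space)
  have EF': "E \<in> sets F'" unfolding sF' by (auto intro: sigma_sets.Basic)
  have EcF': "space M - E \<in> sets F'" using EF' subF' sets.compl_sets[OF EF'] by (auto simp: subalgebra_def)
  define V where "V = (\<lambda>x. indicator E x * g E x + indicator (space M - E) x * g (space M - E) x)"
  have VF'[measurable]: "V \<in> borel_measurable F'" unfolding V_def
    using gF' EF' EcF' by (intro borel_measurable_add borel_measurable_times borel_measurable_indicator) auto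
  have VM[measurable]: "V \<in> borel_measurable M" unfolding V_def by measurable
  have iY: "integrable M Y" by (rule integrable_const_bound[where B=1]) (auto simp: Yb abs_le_iff)
  have iV: "integrable M V" by (rule integrable_const_bound[where B=1])
      (auto simp: V_def indicator_def gb abs_le_iff)
  have bnd: "integrable M (\<lambda>x. indicator C x * indicator X x * h x)"
    if "C \<in> sets M" "X \<in> sets M" "h \<in> borel_measurable M" "\<And>x. x \<in> space M \<Longrightarrow> 0 \<le> h x \<and> h x \<le> 1" for C X and h :: "'a \<Rightarrow> real"
    by (rule integrable_const_bound[where B=1]) (use that in \<open>auto simp: indicator_def abs_le_iff\<close>)
  have "AE x in M. real_cond_exp M F' Y x = V x"
  proof (rule F'.real_cond_exp_charact)
    fix A assume A: "A \<in> sets F'"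
    have sa: "sigma_algebra (space M) (sets F)" using subF
      by (metis sets.sigma_algebra_axioms subalgebra_def)
    have "A \<in> sigma_sets (space M) (sets F \<union> {E})" using A sF' by simp
    then have "A \<in> {A. \<exists>C\<in>sets F. \<exists>D\<in>sets F. A = (C \<inter> E) \<union> (D - E)}"
      by (rule subsetD[OF sigma_sets_split[OF sa sets.sets_into_space[OF E]]])
    then obtain C D where CD: "C \<in> sets F" "D \<in> sets F" "A = (C \<inter> E) \<union> (D - E)"
      by blast
    have CDM[measurable]: "C \<in> sets M" "D \<in> sets M" using CD subF by (auto simp: subalgebra_def)
    have ind: "indicator A x = (indicator C x * indicator E x + indicator D x * indicator (space M - E) x :: real)"
      if "x \<in> space M" for x using that CD by (auto simp: indicator_def)
    have "(\<integral>x\<in>A. Y x \<partial>M) = (\<integral>x. indicator C x * indicator E x * Y x + indicator D x * indicator (space M - E) x * Y x \<partial>M)"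
      unfolding set_lebesgue_integral_def by (intro Bochner_Integration.integral_cong) (auto simp: ind algebra_simps)
    also have "\<dots> = (\<integral>x. indicator C x * indicator E x * Y x \<partial>M) + (\<integral>x. indicator D x * indicator (space M - E) x * Y x \<partial>M)"
      by (intro Bochner_Integration.integral_add bnd) (auto simp: Yb)
    also have "\<dots> = (\<integral>x. indicator C x * indicator E x * g E x \<partial>M) + (\<integral>x. indicator D x * indicator (space M - E) x * g (space M - E) x \<partial>M)"
      using ratio_rep[OF M subF Ym Yb E CD(1)] ratio_rep[OF M subF Ym Yb _ CD(2), of "space M - E"] by (simp add: g_def)
    also have "\<dots> = (\<integral>x. indicator C x * indicator E x * g E x + indicator D x * indicator (space M - E) x * g (space M - E) x \<partial>M)"
      by (intro Bochner_Integration.integral_add[symmetric] bnd) (auto simp: gb)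
    also have "\<dots> = (\<integral>x\<in>A. V x \<partial>M)"
      unfolding set_lebesgue_integral_def V_def by (intro Bochner_Integration.integral_cong) (simp_all add: ind split: split_indicator)
    finally show "(\<integral>x\<in>A. Y x \<partial>M) = (\<integral>x\<in>A. V x \<partial>M)" .
  qed (auto simp: iY iV)
  then have "AE x in M. x \<in> E \<longrightarrow> real_cond_exp M F' Y x = g E x"
    by eventually_elim (auto simp: V_def)
  then show ?thesis unfolding F'_def using gF gb by blast
qed

lemma sig_gen_preimgs_vimage: "sig_gen M (preimgs M f N) = vimage_algebra (space M) f N"
  unfolding sig_gen_def preimgs_def vimage_algebra_def by simp

lemma sets_sig_gen_preimgs:
  assumes "f \<in> measurable M N"
  shows "sets (sig_gen M (preimgs M f N)) = preimgs M f N"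
  unfolding sig_gen_preimgs_vimage using assms
  by (subst sets_vimage_algebra2) (auto simp: preimgs_def measurable_def)

lemma preimgs_sets: "f \<in> measurable M N \<Longrightarrow> preimgs M f N \<subseteq> sets M"
  unfolding preimgs_def by (auto intro: measurable_sets)

lemma subalg_sig_gen:
  assumes "G \<subseteq> sets M"
  shows "subalgebra M (sig_gen M G)"
proof -
  have "G \<subseteq> Pow (space M)" using assms sets.sets_into_space by auto
  then show ?thesis unfolding subalgebra_def sig_gen_def using assms
    by (auto simp: sets.sigma_sets_subset)
qed

lemma abs_mult_le1: "\<bar>a::real\<bar> \<le> 1 \<Longrightarrow> \<bar>b\<bar> \<le> 1 \<Longrightarrow> \<bar>a * b\<bar> \<le> 1"
  by (simp add: abs_mult mult_le_one)

definition bdd :: "'a measure \<Rightarrow> ('a \<Rightarrow> real) \<Rightarrow> bool" where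
  "bdd M h \<longleftrightarrow> h \<in> borel_measurable M \<and> (\<exists>B. AE x in M. \<bar>h x\<bar> \<le> B)"

lemma bdd_mult[intro]: "bdd M f \<Longrightarrow> bdd M g \<Longrightarrow> bdd M (\<lambda>x. f x * g x)"
proof -
  assume "bdd M f" "bdd M g"
  then obtain B1 B2 where m: "f \<in> borel_measurable M" "g \<in> borel_measurable M"
    and a1: "AE x in M. \<bar>f x\<bar> \<le> B1" and a2: "AE x in M. \<bar>g x\<bar> \<le> B2" unfolding bdd_def by auto
  have "AE x in M. \<bar>f x * g x\<bar> \<le> \<bar>B1\<bar> * \<bar>B2\<bar>"
    using a1 a2 by eventually_elim (auto simp: abs_mult intro!: mult_mono)
  then show ?thesis using m unfolding bdd_def by auto
qed

lemma bdd_add[intro]: "bdd M f \<Longrightarrow> bdd M g \<Longrightarrow> bdd M (\<lambda>x. f x + g x)"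
proof -
  assume "bdd M f" "bdd M g"
  then obtain B1 B2 where m: "f \<in> borel_measurable M" "g \<in> borel_measurable M"
    and a1: "AE x in M. \<bar>f x\<bar> \<le> B1" and a2: "AE x in M. \<bar>g x\<bar> \<le> B2" unfolding bdd_def by auto
  have "AE x in M. \<bar>f x + g x\<bar> \<le> B1 + B2"
    using a1 a2 by eventually_elim auto
  then show ?thesis using m unfolding bdd_def by auto
qed

lemma bdd_diff[intro]: "bdd M f \<Longrightarrow> bdd M g \<Longrightarrow> bdd M (\<lambda>x. f x - g x)"
proof -
  assume "bdd M f" "bdd M g"
  then obtain B1 B2 where m: "f \<in> borel_measurable M" "g \<in> borel_measurable M"
    and a1: "AE x in M. \<bar>f x\<bar> \<le> B1" and a2: "AE x in M. \<bar>g x\<bar> \<le> B2" unfolding bdd_def by auto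
  have "AE x in M. \<bar>f x - g x\<bar> \<le> B1 + B2"
    using a1 a2 by eventually_elim auto
  then show ?thesis using m unfolding bdd_def by auto
qed

lemma bdd_abs[intro]: "bdd M f \<Longrightarrow> bdd M (\<lambda>x. \<bar>f x\<bar>)"
  unfolding bdd_def by auto

lemma bdd_power2[intro]: "bdd M f \<Longrightarrow> bdd M (\<lambda>x. (f x)\<^sup>2)"
  unfolding power2_eq_square by (rule bdd_mult)

lemma bdd_const[intro]: "bdd M (\<lambda>x. c)"
  unfolding bdd_def by auto

lemma bdd_indicator[intro]: "A \<in> sets M \<Longrightarrow> bdd M (indicator A)"
  unfolding bdd_def by (auto intro!: exI[of _ 1] simp: indicator_def)

lemma bdd_01:
  assumes "h \<in> borel_measurable M" "AE x in M. 0 \<le> h x \<and> h x \<le> 1" shows "bdd M h"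
proof -
  have "AE x in M. \<bar>h x\<bar> \<le> 1" using assms(2) by eventually_elim auto
  then show ?thesis using assms(1) unfolding bdd_def by auto
qed

lemma bdd_integrable:
  assumes fm: "finite_measure M" and b: "bdd M h" shows "integrable M h"
proof -
  obtain B where m: "h \<in> borel_measurable M" and a: "AE x in M. \<bar>h x\<bar> \<le> B" using b unfolding bdd_def by auto
  show ?thesis using finite_measure.integrable_const_bound[OF fm, of h B] a m by simp
qed

lemma bdd_meas: "bdd M h \<Longrightarrow> h \<in> borel_measurable M"
  unfolding bdd_def by auto

lemma per_block:
  assumes M: "prob_space M" and subF: "subalgebra M F" and Ym[measurable]: "Y \<in> borel_measurable M"
    and Yb: "\<And>x. x\<in>space M \<Longrightarrow> 0 \<le> Y x \<and> Y x \<le> 1" and E[measurable]: "E \<in> sets M"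
    and G: "G \<in> sets F"
  defines "Z \<equiv> real_cond_exp M (sigma (space M) (sets F \<union> {E})) Y"
    and "\<mu> \<equiv> real_cond_exp M F Y"
    and "c \<equiv> (\<integral>x. indicator E x * Y x \<partial>M) / measure M E"
  shows "(\<integral>x. indicator E x * (Z x - c)\<^sup>2 \<partial>M)
     \<le> (\<integral>x. \<bar>indicator E x - indicator G x\<bar> \<partial>M) + (\<integral>x. \<mu> x * indicator E x * Y x \<partial>M) - c\<^sup>2 * measure M E"
proof -
  interpret prob_space M by fact
  define F' where "F' = sigma (space M) (sets F \<union> {E})"
  have subF': "subalgebra M F'" "subalgebra F' F" unfolding F'_def using subalg_sigma_ins[OF subF E] by auto
  interpret F': finite_measure_subalgebra M F' by unfold_locales (rule subF')
  interpret F: finite_measure_subalgebra M F by unfold_locales (rule subF)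
  have sF': "sets F' = sigma_sets (space M) (sets F \<union> {E})" unfolding F'_def
    using subF sets.sets_into_space[OF E] by (intro sets_measure_of) (auto simp: subalgebra_def dest: sets.sets_into_space)
  have EF'[measurable]: "E \<in> sets F'" unfolding sF' by (auto intro: sigma_sets.Basic)
  have GM[measurable]: "G \<in> sets M" using G subF by (auto simp: subalgebra_def)
  have GF[measurable]: "G \<in> sets F" by fact
  have ZF'[measurable]: "Z \<in> borel_measurable F'" unfolding Z_def F'_def[symmetric] by measurable
  have ZM[measurable]: "Z \<in> borel_measurable M" unfolding Z_def by measurable
  have \<mu>F[measurable]: "\<mu> \<in> borel_measurable F" unfolding \<mu>_def by measurable
  have \<mu>F': "\<mu> \<in> borel_measurable F'" using \<mu>F subF' measurable_from_subalg by blast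
  have \<mu>M[measurable]: "\<mu> \<in> borel_measurable M" unfolding \<mu>_def by measurable
  have iY: "integrable M Y" by (rule integrable_const_bound[where B=1]) (auto simp: Yb abs_le_iff)
  have ZB: "AE x in M. 0 \<le> Z x \<and> Z x \<le> 1"
  proof -
    have "AE x in M. 0 \<le> Z x" unfolding Z_def F'_def[symmetric] by (rule F'.real_cond_exp_pos) (auto simp: Yb)
    moreover have "AE x in M. Z x \<le> 1" unfolding Z_def F'_def[symmetric] by (rule F'.real_cond_exp_le_c) (auto simp: Yb iY)
    ultimately show ?thesis by auto
  qed
  have \<mu>B: "AE x in M. 0 \<le> \<mu> x \<and> \<mu> x \<le> 1"
  proof -
    have "AE x in M. 0 \<le> \<mu> x" unfolding \<mu>_def by (rule F.real_cond_exp_pos) (auto simp: Yb)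
    moreover have "AE x in M. \<mu> x \<le> 1" unfolding \<mu>_def by (rule F.real_cond_exp_le_c) (auto simp: Yb iY)
    ultimately show ?thesis by auto
  qed
  obtain f where fF[measurable]: "f \<in> borel_measurable F" and fb: "\<And>x. 0 \<le> f x \<and> f x \<le> 1"
    and fE: "AE x in M. x \<in> E \<longrightarrow> Z x = f x"
    using cond_exp_rep[OF M subF Ym Yb E] unfolding Z_def by blast
  have fM[measurable]: "f \<in> borel_measurable M" using fF subF measurable_from_subalg by blast
  have AB: "AE x in M. 0 \<le> Z x \<and> Z x \<le> 1 \<and> 0 \<le> \<mu> x \<and> \<mu> x \<le> 1 \<and> 0 \<le> Y x \<and> Y x \<le> 1 \<and> 0 \<le> f x \<and> f x \<le> 1"
    using ZB \<mu>B fb Yb by auto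
  have bZ[intro]: "bdd M Z" by (rule bdd_01[OF ZM ZB])
  have bZ'[intro]: "bdd M (real_cond_exp M F' Y)" using bZ unfolding Z_def F'_def .
  have b\<mu>[intro]: "bdd M \<mu>" by (rule bdd_01[OF \<mu>M \<mu>B])
  have bY[intro]: "bdd M Y" by (rule bdd_01[OF Ym]) (auto simp: Yb)
  have bf[intro]: "bdd M f" by (rule bdd_01[OF fM]) (auto simp: fb)
  have bE[intro]: "bdd M (indicator E)" "bdd M (indicator G)" by auto
  have ib: "integrable M h" if "bdd M h" for h using that bdd_integrable[of M h] finite_measure_axioms by blast
  define I where "I = (\<integral>x. indicator E x * Y x \<partial>M)"
  define P where "P = measure M E"
  have IP: "0 \<le> I" "I \<le> P"
  proof -
    show "0 \<le> I" unfolding I_def by (rule integral_nonneg_AE) (auto simp: Yb)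
    have "I \<le> (\<integral>x. indicator E x \<partial>M)" unfolding I_def
      by (rule integral_mono_AE) (auto intro!: ib AE_I2 simp: Yb split: split_indicator)
    then show "I \<le> P" by (simp add: P_def)
  qed
  have cdef: "c = I / P" unfolding c_def I_def P_def by simp
  have cb: "0 \<le> c" "c \<le> 1" using IP by (auto simp: cdef divide_le_eq_1)
  have cI: "I = c * P" using IP by (cases "P = 0") (auto simp: cdef)
  have a: "(\<integral>x. indicator E x * Z x \<partial>M) = I"
    unfolding Z_def F'_def[symmetric] I_def
    by (rule F'.real_cond_exp_intg) (auto intro!: ib bdd_mult bdd_indicator bZ' bY)
  have b: "(\<integral>x. (indicator E x * Z x) * Z x \<partial>M) = (\<integral>x. (indicator E x * Z x) * Y x \<partial>M)"
    unfolding Z_def F'_def[symmetric]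
    by (rule F'.real_cond_exp_intg) (auto intro!: ib bdd_mult bdd_indicator bZ' bY)
  have c: "(\<integral>x. (\<mu> x * indicator E x) * Z x \<partial>M) = (\<integral>x. (\<mu> x * indicator E x) * Y x \<partial>M)"
    unfolding Z_def F'_def[symmetric]
    by (rule F'.real_cond_exp_intg) (auto intro!: ib bdd_mult bdd_indicator b\<mu> bY borel_measurable_times \<mu>F' EF')
  have d: "(\<integral>x. (indicator G x * f x) * \<mu> x \<partial>M) = (\<integral>x. (indicator G x * f x) * Y x \<partial>M)"
    unfolding \<mu>_def
    by (rule F.real_cond_exp_intg) (auto intro!: ib bdd_mult bdd_indicator bf bY)
  have e: "AE x in M. indicator E x * Z x = indicator E x * f x"
    using fE by eventually_elim (auto simp: indicator_def)
  have i1: "integrable M (\<lambda>x. (indicator E x * Z x) * Z x)" by (auto intro!: ib bdd_mult bdd_indicator bZ)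
  have i2: "integrable M (\<lambda>x. indicator E x * Z x)" by (auto intro!: ib bdd_mult bdd_indicator bZ)
  have i3: "integrable M (\<lambda>x. indicator E x :: real)" by (auto intro!: ib bdd_indicator)
  have "(\<integral>x. indicator E x * (Z x - c)\<^sup>2 \<partial>M)
      = (\<integral>x. (indicator E x * Z x) * Z x - (2*c) * (indicator E x * Z x) + c\<^sup>2 * indicator E x \<partial>M)"
    by (intro Bochner_Integration.integral_cong) (auto simp: power2_eq_square algebra_simps)
  also have "\<dots> = (\<integral>x. (indicator E x * Z x) * Z x \<partial>M) - (2*c) * (\<integral>x. indicator E x * Z x \<partial>M) + c\<^sup>2 * P"
    using i1 i2 i3 by (simp add: P_def)
  also have "\<dots> = (\<integral>x. (indicator E x * Z x) * Y x \<partial>M) - c\<^sup>2 * P"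
    using a b cI by (simp add: power2_eq_square)
  also have "(\<integral>x. (indicator E x * Z x) * Y x \<partial>M)
      = (\<integral>x. (Y x - \<mu> x) * (indicator E x * Z x) + (\<mu> x * indicator E x) * Z x \<partial>M)"
    by (intro Bochner_Integration.integral_cong) (auto simp: algebra_simps)
  also have "\<dots> = (\<integral>x. (Y x - \<mu> x) * (indicator E x * Z x) \<partial>M) + (\<integral>x. (\<mu> x * indicator E x) * Z x \<partial>M)"
    by (intro Bochner_Integration.integral_add ib bdd_mult bdd_diff bdd_indicator bZ bY b\<mu> E)
  also have "(\<integral>x. (Y x - \<mu> x) * (indicator E x * Z x) \<partial>M) = (\<integral>x. (Y x - \<mu> x) * (indicator E x * f x) \<partial>M)"
    by (intro integral_cong_AE) (use e in \<open>auto elim!: eventually_mono\<close>)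
  also have "\<dots> = (\<integral>x. (Y x - \<mu> x) * (indicator E x - indicator G x) * f x + ((indicator G x * f x) * Y x - (indicator G x * f x) * \<mu> x) \<partial>M)"
    by (intro Bochner_Integration.integral_cong) (auto simp: algebra_simps)
  also have "\<dots> = (\<integral>x. (Y x - \<mu> x) * (indicator E x - indicator G x) * f x \<partial>M) + ((\<integral>x. (indicator G x * f x) * Y x \<partial>M) - (\<integral>x. (indicator G x * f x) * \<mu> x \<partial>M))"
    by (subst Bochner_Integration.integral_add; (subst Bochner_Integration.integral_diff)?)
       (auto intro!: ib bdd_mult bdd_diff bdd_indicator bf bY b\<mu>)
  also have "\<dots> = (\<integral>x. (Y x - \<mu> x) * (indicator E x - indicator G x) * f x \<partial>M)"
    using d by simp
  also have "\<dots> \<le> (\<integral>x. \<bar>indicator E x - indicator G x\<bar> \<partial>M)"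
  proof (rule integral_mono_AE)
    show "AE x in M. (Y x - \<mu> x) * (indicator E x - indicator G x) * f x \<le> \<bar>indicator E x - indicator G x\<bar>"
      using AB
    proof eventually_elim
      case (elim x)
      have "\<bar>Y x - \<mu> x\<bar> \<le> 1" "\<bar>f x\<bar> \<le> 1" using elim by auto
      then have "\<bar>(Y x - \<mu> x) * f x\<bar> \<le> 1" by (rule abs_mult_le1)
      then have "\<bar>(Y x - \<mu> x) * f x\<bar> * \<bar>indicator E x - indicator G x\<bar> \<le> \<bar>indicator E x - indicator G x\<bar>"
        by (simp add: mult_left_le_one_le)
      then have "\<bar>(Y x - \<mu> x) * (indicator E x - indicator G x) * f x\<bar> \<le> \<bar>indicator E x - indicator G x\<bar>"
        by (simp add: abs_mult mult_ac)
      then show ?case by (meson abs_ge_self order_trans)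
    qed
  qed (auto intro!: ib bdd_mult bdd_diff bdd_indicator bf bY b\<mu> bdd_abs)
  also have "(\<integral>x. (\<mu> x * indicator E x) * Z x \<partial>M) = (\<integral>x. \<mu> x * indicator E x * Y x \<partial>M)"
    using c by simp
  finally show ?thesis by (simp add: P_def)
qed

lemma mk_partition:
  assumes tu: "tu \<in> measurable M Mt" and n: "0 < (n::nat)"
    and Ee: "\<And>j. j < n \<Longrightarrow> E j \<in> preimgs M tu Mt"
    and disj: "\<And>i j. i < n \<Longrightarrow> j < n \<Longrightarrow> i \<noteq> j \<Longrightarrow> E i \<inter> E j = {}"
    and cov: "(\<Union>j<n. E j) = space M"
  shows "\<exists>B::nat \<Rightarrow> _. (\<forall>j. B j \<in> sets Mt) \<and> disjoint_family B \<and> (\<Union>j. B j) = space Mt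
     \<and> (\<forall>j<n. tu -` B j \<inter> space M = E j) \<and> (\<forall>j\<ge>n. B j = {})"
proof -
  have "\<forall>j. \<exists>C. j < n \<longrightarrow> C \<in> sets Mt \<and> E j = tu -` C \<inter> space M"
    using Ee unfolding preimgs_def by blast
  then obtain B0 where B0: "\<And>j. j < n \<Longrightarrow> B0 j \<in> sets Mt" "\<And>j. j < n \<Longrightarrow> E j = tu -` B0 j \<inter> space M"
    by metis
  define B where "B j = (if j < n - 1 then (B0 j \<inter> space Mt) - (\<Union>l<j. B0 l)
      else if j = n - 1 then space Mt - (\<Union>l<n-1. B0 l) else {})" for j
  have Bm: "B j \<in> sets Mt" for j
    unfolding B_def using B0(1) n by (auto intro!: sets.Diff sets.finite_UN sets.Int)
  have Bsub: "B j \<subseteq> space Mt" for j unfolding B_def by auto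
  have Bsub0: "j < n - 1 \<Longrightarrow> B j \<subseteq> B0 j" for j unfolding B_def by auto
  have disjB: "disjoint_family B"
    unfolding disjoint_family_on_def
  proof (intro ballI impI)
    fix i j :: nat assume "i \<noteq> j"
    then consider "i < j" | "j < i" by linarith
    then show "B i \<inter> B j = {}"
    proof cases
      case 1
      then show ?thesis using Bsub0[of i] unfolding B_def by (auto split: if_splits)
    next
      case 2
      then show ?thesis using Bsub0[of j] unfolding B_def by (auto split: if_splits)
    qed
  qed
  have unB: "(\<Union>j. B j) = space Mt"
  proof
    show "(\<Union>j. B j) \<subseteq> space Mt" using Bsub by auto
    show "space Mt \<subseteq> (\<Union>j. B j)"
    proof
      fix t assume t: "t \<in> space Mt"
      show "t \<in> (\<Union>j. B j)"
      proof (cases "\<exists>l<n-1. t \<in> B0 l")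
        case True
        define l where "l = (LEAST l. l < n - 1 \<and> t \<in> B0 l)"
        have l: "l < n - 1 \<and> t \<in> B0 l" unfolding l_def using True by (rule LeastI_ex)
        have "\<not> (k < n - 1 \<and> t \<in> B0 k)" if "k < l" for k using not_less_Least[OF that[unfolded l_def]] l_def by simp
        then have "t \<in> B l" using l t unfolding B_def by auto
        then show ?thesis by auto
      next
        case False
        then have "t \<in> B (n - 1)" using t unfolding B_def by auto
        then show ?thesis by auto
      qed
    qed
  qed
  have pre: "tu -` B j \<inter> space M = E j" if j: "j < n" for j
  proof (cases "j < n - 1")
    case True
    have "tu -` B j \<inter> space M = (tu -` B0 j \<inter> space M) - (\<Union>l<j. tu -` B0 l \<inter> space M)"
      using True tu unfolding B_def by (auto simp: measurable_def)
    also have "\<dots> = E j - (\<Union>l<j. E l)" using B0(2) True by auto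
    also have "\<dots> = E j"
    proof -
      have "\<forall>l<j. E j \<inter> E l = {}" using disj True by auto
      then show ?thesis by blast
    qed
    finally show ?thesis .
  next
    case False
    then have jn: "j = n - 1" using j by simp
    have "tu -` B j \<inter> space M = space M - (\<Union>l<n-1. tu -` B0 l \<inter> space M)"
      using jn tu n unfolding B_def by (auto simp: measurable_def)
    also have "\<dots> = space M - (\<Union>l<n-1. E l)" using B0(2) by auto
    also have "\<dots> = E j"
    proof -
      have "E j \<subseteq> space M" using cov j by auto
      moreover have "space M - (\<Union>l<n-1. E l) \<subseteq> E j"
      proof
        fix x assume x: "x \<in> space M - (\<Union>l<n-1. E l)"
        then obtain l where l: "l < n" "x \<in> E l" using cov by auto
        then have "\<not> l < n - 1" using x by auto
        then have "l = j" using l jn by simp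
        then show "x \<in> E j" using l by simp
      qed
      moreover have "E j \<inter> (\<Union>l<n-1. E l) = {}"
      proof -
        have "\<forall>l<n-1. E j \<inter> E l = {}" using disj jn n by auto
        then show ?thesis by blast
      qed
      ultimately show ?thesis by blast
    qed
    finally show ?thesis .
  qed
  have "\<forall>j\<ge>n. B j = {}" unfolding B_def using n by auto
  then show ?thesis using Bm disjB unB pre by blast
qed

lemma bucket:
  assumes M: "prob_space M" and subF: "subalgebra M F" and Ym[measurable]: "Y \<in> borel_measurable M"
    and Yb: "\<And>x. x\<in>space M \<Longrightarrow> 0 \<le> Y x \<and> Y x \<le> 1" and E: "E \<in> sets F"
    and bnd: "AE x in M. x \<in> E \<longrightarrow> a \<le> real_cond_exp M F Y x \<and> real_cond_exp M F Y x \<le> a + w"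
  defines "c \<equiv> (\<integral>x. indicator E x * Y x \<partial>M) / measure M E"
  shows "(\<integral>x. indicator E x * real_cond_exp M F Y x * Y x \<partial>M) - c\<^sup>2 * measure M E \<le> w\<^sup>2 * measure M E"
proof -
  interpret prob_space M by fact
  interpret F: finite_measure_subalgebra M F by unfold_locales (rule subF)
  define \<mu> where "\<mu> = real_cond_exp M F Y"
  have EM[measurable]: "E \<in> sets M" using E subF by (auto simp: subalgebra_def)
  have EF[measurable]: "E \<in> sets F" by fact
  have \<mu>F[measurable]: "\<mu> \<in> borel_measurable F" unfolding \<mu>_def by measurable
  have \<mu>M[measurable]: "\<mu> \<in> borel_measurable M" unfolding \<mu>_def by measurable
  have iY: "integrable M Y" by (rule integrable_const_bound[where B=1]) (auto simp: Yb abs_le_iff)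
  have \<mu>B: "AE x in M. 0 \<le> \<mu> x \<and> \<mu> x \<le> 1"
  proof -
    have "AE x in M. 0 \<le> \<mu> x" unfolding \<mu>_def by (rule F.real_cond_exp_pos) (auto simp: Yb)
    moreover have "AE x in M. \<mu> x \<le> 1" unfolding \<mu>_def by (rule F.real_cond_exp_le_c) (auto simp: Yb iY)
    ultimately show ?thesis by auto
  qed
  have b\<mu>[intro]: "bdd M \<mu>" by (rule bdd_01[OF \<mu>M \<mu>B])
  have b\<mu>'[intro]: "bdd M (real_cond_exp M F Y)" using b\<mu> unfolding \<mu>_def .
  have bY[intro]: "bdd M Y" by (rule bdd_01[OF Ym]) (auto simp: Yb)
  have ib: "integrable M h" if "bdd M h" for h using that bdd_integrable[of M h] finite_measure_axioms by blast
  define I where "I = (\<integral>x. indicator E x * Y x \<partial>M)"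
  define P where "P = measure M E"
  have IP: "0 \<le> I" "I \<le> P"
  proof -
    show "0 \<le> I" unfolding I_def by (rule integral_nonneg_AE) (auto simp: Yb)
    have "I \<le> (\<integral>x. indicator E x \<partial>M)" unfolding I_def
      using ib[OF bdd_mult[OF bdd_indicator[OF EM] bY]] ib[OF bdd_indicator[OF EM]]
      by (intro integral_mono_AE AE_I2) (auto simp: Yb split: split_indicator)
    then show "I \<le> P" by (simp add: P_def)
  qed
  have cdef: "c = I / P" unfolding c_def I_def P_def by simp
  have cI: "I = c * P" using IP by (cases "P = 0") (auto simp: cdef)
  have a1: "(\<integral>x. indicator E x * \<mu> x \<partial>M) = I"
    unfolding \<mu>_def I_def
    by (rule F.real_cond_exp_intg) (auto intro!: ib bdd_mult bdd_indicator b\<mu>' bY)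
  have a2: "(\<integral>x. (indicator E x * \<mu> x) * \<mu> x \<partial>M) = (\<integral>x. (indicator E x * \<mu> x) * Y x \<partial>M)"
    unfolding \<mu>_def
    by (rule F.real_cond_exp_intg) (auto intro!: ib bdd_mult bdd_indicator b\<mu>' bY)
  have "(\<integral>x. indicator E x * (\<mu> x - a)\<^sup>2 \<partial>M) \<le> (\<integral>x. w\<^sup>2 * indicator E x \<partial>M)"
  proof (rule integral_mono_AE)
    show "AE x in M. indicator E x * (\<mu> x - a)\<^sup>2 \<le> w\<^sup>2 * indicator E x"
      using bnd unfolding \<mu>_def[symmetric]
    proof eventually_elim
      case (elim x)
      show ?case
      proof (cases "x \<in> E")
        case True
        then have "\<bar>\<mu> x - a\<bar> \<le> \<bar>w\<bar>" using elim by auto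
        then have "(\<mu> x - a)\<^sup>2 \<le> w\<^sup>2" by (metis abs_le_square_iff)
        then show ?thesis using True by simp
      qed simp
    qed
  qed (auto intro!: ib bdd_mult bdd_indicator b\<mu> bdd_power2 bdd_diff)
  also have "\<dots> = w\<^sup>2 * P" by (simp add: P_def)
  finally have le: "(\<integral>x. indicator E x * (\<mu> x - a)\<^sup>2 \<partial>M) \<le> w\<^sup>2 * P" .
  have "(\<integral>x. indicator E x * (\<mu> x - a)\<^sup>2 \<partial>M)
      = (\<integral>x. (indicator E x * \<mu> x) * \<mu> x - (2*a) * (indicator E x * \<mu> x) + a\<^sup>2 * indicator E x \<partial>M)"
    by (intro Bochner_Integration.integral_cong) (auto simp: power2_eq_square algebra_simps)
  also have "\<dots> = (\<integral>x. (indicator E x * \<mu> x) * \<mu> x \<partial>M) - (2*a) * (\<integral>x. indicator E x * \<mu> x \<partial>M) + a\<^sup>2 * P"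
    by (subst Bochner_Integration.integral_add; (subst Bochner_Integration.integral_diff)?)
       (auto intro!: ib bdd_mult bdd_indicator b\<mu> simp: P_def)
  finally have eq: "(\<integral>x. indicator E x * (\<mu> x - a)\<^sup>2 \<partial>M) = (\<integral>x. (indicator E x * \<mu> x) * Y x \<partial>M) - 2*a*(c*P) + a\<^sup>2 * P"
    using a1 a2 cI by simp
  have "0 \<le> (a - c)\<^sup>2 * P" unfolding P_def by simp
  then show ?thesis using le eq unfolding \<mu>_def[symmetric] P_def[symmetric]
    by (simp add: power2_eq_square algebra_simps)
qed

lemma sum_partition:
  fixes h :: "'a \<Rightarrow> real"
  assumes M: "finite_measure M" and E: "\<And>j. j < n \<Longrightarrow> E j \<in> sets M"
    and one: "\<And>x. x \<in> space M \<Longrightarrow> (\<Sum>j<n. indicator (E j) x) = (1::real)"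
    and h: "integrable M h"
  shows "(\<Sum>j<n. \<integral>x. indicator (E j) x * h x \<partial>M) = (\<integral>x. h x \<partial>M)"
proof -
  have "(\<Sum>j<n. \<integral>x. indicator (E j) x * h x \<partial>M) = (\<integral>x. (\<Sum>j<n. indicator (E j) x * h x) \<partial>M)"
  proof (rule Bochner_Integration.integral_sum[symmetric])
    fix j assume "j \<in> {..<n}"
    then have "E j \<in> sets M" using E by auto
    then show "integrable M (\<lambda>x. indicator (E j) x * h x)"
      using integrable_mult_indicator[OF _ h] by simp
  qed
  also have "\<dots> = (\<integral>x. h x \<partial>M)"
    by (intro Bochner_Integration.integral_cong) (auto simp: sum_distrib_right[symmetric] one)
  finally show ?thesis .
qed

lemma sum_abs_diff_delta:
  assumes "a < (n::nat)" "b < n"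
  shows "(\<Sum>j<n. \<bar>(if a = j then 1 else 0) - (if b = j then 1 else 0)\<bar>) = (if a = b then 0 else (2::real))"
proof (cases "a = b")
  case True then show ?thesis by simp
next
  case False
  have "(\<Sum>j<n. \<bar>(if a = j then 1 else 0) - (if b = j then 1 else 0)\<bar>)
      = (\<Sum>j<n. (if a = j then 1 else 0) + (if b = j then (1::real) else 0))"
    using False by (intro sum.cong) auto
  also have "\<dots> = 2" using assms by (simp add: sum.distrib)
  finally show ?thesis using False by simp
qed

lemma main_bound:
  fixes M :: "'a measure" and Ms :: "'s measure" and Mt :: "'t measure"
    and sg :: "'a \<Rightarrow> 's" and tu :: "'a \<Rightarrow> 't" and Y :: "'a \<Rightarrow> real" and \<delta> w :: real
    and idx :: "real \<Rightarrow> nat" and lo :: "nat \<Rightarrow> real" and n :: nat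
  assumes info: "info_structure M Ms Mt sg tu Y"
    and sub: "approx_rect_subst M Ms Mt sg tu Y \<delta>"
    and n: "0 < n" and idxm[measurable]: "idx \<in> borel \<rightarrow>\<^sub>M count_space UNIV"
    and idxn: "\<And>x. idx x < n" and w: "0 \<le> w"
    and lo: "\<And>x. 0 \<le> x \<Longrightarrow> x \<le> 1 \<Longrightarrow> lo (idx x) \<le> x \<and> x \<le> lo (idx x) + w"
  shows "(\<integral>\<omega>. (mu_st M Ms Mt sg tu Y \<omega> - mu_s M Mt tu Y \<omega>)\<^sup>2 \<partial>M)
     \<le> \<delta> + 2 * measure M {\<omega>\<in>space M. idx (mu_s M Mt tu Y \<omega>) \<noteq> idx (mu_s M Ms sg Y \<omega>)}
        + (\<integral>\<omega>. \<bar>mu_s M Ms sg Y \<omega> - mu_s M Mt tu Y \<omega>\<bar> \<partial>M) + w\<^sup>2"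
proof -
  have M: "prob_space M" and sgm[measurable]: "sg \<in> M \<rightarrow>\<^sub>M Ms" and tum[measurable]: "tu \<in> M \<rightarrow>\<^sub>M Mt"
    and Ym[measurable]: "Y \<in> borel_measurable M" and Yb: "\<And>x. x\<in>space M \<Longrightarrow> 0 \<le> Y x \<and> Y x \<le> 1"
    using info unfolding info_structure_def by auto
  interpret prob_space M by fact
  have ib: "integrable M h" if "bdd M h" for h using that bdd_integrable[of M h] finite_measure_axioms by blast
  define Fs where "Fs = sig_gen M (preimgs M sg Ms)"
  define Ft where "Ft = sig_gen M (preimgs M tu Mt)"
  define Fst where "Fst = sig_gen M (preimgs M sg Ms \<union> preimgs M tu Mt)"
  have subs: "subalgebra M Fs" unfolding Fs_def by (rule subalg_sig_gen[OF preimgs_sets[OF sgm]])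
  have subt: "subalgebra M Ft" unfolding Ft_def by (rule subalg_sig_gen[OF preimgs_sets[OF tum]])
  have subst: "subalgebra M Fst" unfolding Fst_def
    by (rule subalg_sig_gen) (use preimgs_sets[OF sgm] preimgs_sets[OF tum] in auto)
  interpret Fs: finite_measure_subalgebra M Fs by unfold_locales (rule subs)
  interpret Ft: finite_measure_subalgebra M Ft by unfold_locales (rule subt)
  interpret Fst: finite_measure_subalgebra M Fst by unfold_locales (rule subst)
  have setsFs: "sets Fs = preimgs M sg Ms" unfolding Fs_def by (rule sets_sig_gen_preimgs[OF sgm])
  have setsFt: "sets Ft = preimgs M tu Mt" unfolding Ft_def by (rule sets_sig_gen_preimgs[OF tum])
  define \<mu>s where "\<mu>s = mu_s M Ms sg Y"
  define \<mu>t where "\<mu>t = mu_s M Mt tu Y"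
  define \<mu>st where "\<mu>st = mu_st M Ms Mt sg tu Y"
  have \<mu>s_def': "\<mu>s = real_cond_exp M Fs Y" unfolding \<mu>s_def mu_s_def Fs_def ..
  have \<mu>t_def': "\<mu>t = real_cond_exp M Ft Y" unfolding \<mu>t_def mu_s_def Ft_def ..
  have \<mu>st_def': "\<mu>st = real_cond_exp M Fst Y" unfolding \<mu>st_def mu_st_def Fst_def ..
  have iY: "integrable M Y" by (rule integrable_const_bound[where B=1]) (auto simp: Yb abs_le_iff)
  have \<mu>sF[measurable]: "\<mu>s \<in> borel_measurable Fs" unfolding \<mu>s_def' by measurable
  have \<mu>tF[measurable]: "\<mu>t \<in> borel_measurable Ft" unfolding \<mu>t_def' by measurable
  have \<mu>sM[measurable]: "\<mu>s \<in> borel_measurable M" unfolding \<mu>s_def' by measurable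
  have \<mu>tM[measurable]: "\<mu>t \<in> borel_measurable M" unfolding \<mu>t_def' by measurable
  have \<mu>stM[measurable]: "\<mu>st \<in> borel_measurable M" unfolding \<mu>st_def' by measurable
  have \<mu>sB: "AE x in M. 0 \<le> \<mu>s x \<and> \<mu>s x \<le> 1"
  proof -
    have "AE x in M. 0 \<le> \<mu>s x" unfolding \<mu>s_def' by (rule Fs.real_cond_exp_pos) (auto simp: Yb)
    moreover have "AE x in M. \<mu>s x \<le> 1" unfolding \<mu>s_def' by (rule Fs.real_cond_exp_le_c) (auto simp: Yb iY)
    ultimately show ?thesis by auto
  qed
  have \<mu>tB: "AE x in M. 0 \<le> \<mu>t x \<and> \<mu>t x \<le> 1"
  proof -
    have "AE x in M. 0 \<le> \<mu>t x" unfolding \<mu>t_def' by (rule Ft.real_cond_exp_pos) (auto simp: Yb)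
    moreover have "AE x in M. \<mu>t x \<le> 1" unfolding \<mu>t_def' by (rule Ft.real_cond_exp_le_c) (auto simp: Yb iY)
    ultimately show ?thesis by auto
  qed
  have \<mu>stB: "AE x in M. 0 \<le> \<mu>st x \<and> \<mu>st x \<le> 1"
  proof -
    have "AE x in M. 0 \<le> \<mu>st x" unfolding \<mu>st_def' by (rule Fst.real_cond_exp_pos) (auto simp: Yb)
    moreover have "AE x in M. \<mu>st x \<le> 1" unfolding \<mu>st_def' by (rule Fst.real_cond_exp_le_c) (auto simp: Yb iY)
    ultimately show ?thesis by auto
  qed
  have b\<mu>s[intro]: "bdd M \<mu>s" by (rule bdd_01[OF \<mu>sM \<mu>sB])
  have b\<mu>t[intro]: "bdd M \<mu>t" by (rule bdd_01[OF \<mu>tM \<mu>tB])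
  have b\<mu>st[intro]: "bdd M \<mu>st" by (rule bdd_01[OF \<mu>stM \<mu>stB])
  have bY[intro]: "bdd M Y" by (rule bdd_01[OF Ym]) (auto simp: Yb)
  define E where "E j = {\<omega>\<in>space M. idx (\<mu>t \<omega>) = j}" for j
  define G where "G j = {\<omega>\<in>space M. idx (\<mu>s \<omega>) = j}" for j
  have EFt: "E j \<in> sets Ft" for j
  proof -
    have "{\<omega>\<in>space Ft. idx (\<mu>t \<omega>) = j} \<in> sets Ft" by measurable
    moreover have "space Ft = space M" using subt by (simp add: subalgebra_def)
    ultimately show ?thesis unfolding E_def by simp
  qed
  have GFs: "G j \<in> sets Fs" for j
  proof -
    have "{\<omega>\<in>space Fs. idx (\<mu>s \<omega>) = j} \<in> sets Fs" by measurable
    moreover have "space Fs = space M" using subs by (simp add: subalgebra_def)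
    ultimately show ?thesis unfolding G_def by simp
  qed
  have EM[measurable]: "E j \<in> sets M" for j using EFt subt by (auto simp: subalgebra_def)
  have GM[measurable]: "G j \<in> sets M" for j using GFs subs by (auto simp: subalgebra_def)
  have Eone: "(\<Sum>j<n. indicator (E j) x) = (1::real)" if "x \<in> space M" for x
    using that idxn[of "\<mu>t x"] by (simp add: E_def indicator_def)
  have Epre: "E j \<in> preimgs M tu Mt" for j using EFt setsFt by simp
  have Edisj: "E i \<inter> E j = {}" if "i \<noteq> j" for i j using that unfolding E_def by auto
  have Ecov: "(\<Union>j<n. E j) = space M" using idxn unfolding E_def by auto
  obtain B :: "nat \<Rightarrow> 't set" where Bm: "\<And>j. B j \<in> sets Mt" and Bdisj: "disjoint_family B"
    and Bun: "(\<Union>j. B j) = space Mt" and Bpre: "\<And>j. j < n \<Longrightarrow> tu -` B j \<inter> space M = E j"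
    and Bempty: "\<And>j. n \<le> j \<Longrightarrow> B j = {}"
  proof -
    have "\<exists>B::nat \<Rightarrow> 't set. (\<forall>j. B j \<in> sets Mt) \<and> disjoint_family B \<and> (\<Union>j. B j) = space Mt
     \<and> (\<forall>j<n. tu -` B j \<inter> space M = E j) \<and> (\<forall>j\<ge>n. B j = {})"
      by (rule mk_partition[OF tum n]) (use Epre Edisj Ecov in auto)
    then show ?thesis using that by blast
  qed
  have rect: "rect_event M sg tu (space Ms) (B j) = (if j < n then E j else {})" for j
  proof (cases "j < n")
    case True
    have "rect_event M sg tu (space Ms) (B j) = tu -` B j \<inter> space M"
      unfolding rect_event_def using sgm by (auto simp: measurable_def)
    then show ?thesis using Bpre True by simp
  next
    case False
    then show ?thesis using Bempty[of j] unfolding rect_event_def by simp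
  qed
  have p1: "\<forall>i. space Ms \<in> sets Ms \<and> B i \<in> sets Mt" using Bm by simp
  have p2: "disjoint_family (\<lambda>i. space Ms \<times> B i)" unfolding disjoint_family_on_def
  proof (intro ballI impI)
    fix i j :: nat assume "i \<noteq> j"
    then have "B i \<inter> B j = {}" using Bdisj by (simp add: disjoint_family_on_def)
    then show "(space Ms \<times> B i) \<inter> (space Ms \<times> B j) = {}" by auto
  qed
  have "(\<Union>i. space Ms \<times> B i) = space Ms \<times> (\<Union>i. B i)" by auto
  then have p3: "(\<Union>i. space Ms \<times> B i) = space Ms \<times> space Mt" using Bun by simp
  have part: "(\<forall>i. space Ms \<in> sets Ms \<and> B i \<in> sets Mt) \<and> disjoint_family (\<lambda>i. space Ms \<times> B i) \<and>
       (\<Union>i. space Ms \<times> B i) = space Ms \<times> space Mt" using p1 p2 p3 by blast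
  have S: "(\<Sum>i. \<integral>\<omega>. indicator (rect_event M sg tu (space Ms) (B i)) \<omega> *
                   (mu_st M Ms Mt sg tu Y \<omega> - mu_sT M Mt tu sg Y (space Ms) \<omega>)\<^sup>2 \<partial>M)
       \<le> (\<Sum>i. \<integral>\<omega>. indicator (rect_event M sg tu (space Ms) (B i)) \<omega> *
                   (mu_sT M Ms sg tu Y (B i) \<omega> - mu_ST M sg tu Y (space Ms) (B i))\<^sup>2 \<partial>M) + \<delta>"
    using sub[unfolded approx_rect_subst_def, rule_format, of "\<lambda>_. space Ms" B] part by simp
  have sgpre: "sg -` space Ms \<inter> space M = space M" using sgm by (auto simp: measurable_def)
  have spre: "space M \<in> preimgs M tu Mt" unfolding preimgs_def
    using tum by (auto simp: measurable_def intro!: exI[of _ "space Mt"])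
  have muT0: "mu_sT M Mt tu sg Y (space Ms) = \<mu>t"
    unfolding mu_sT_def \<mu>t_def mu_s_def sgpre using spre by (simp add: insert_absorb)
  define Z where "Z i = real_cond_exp M (sigma (space M) (sets Fs \<union> {E i})) Y" for i
  define c where "c i = (\<integral>x. indicator (E i) x * Y x \<partial>M) / measure M (E i)" for i
  have muTi: "mu_sT M Ms sg tu Y (B i) = Z i" if "i < n" for i
    unfolding mu_sT_def Z_def sig_gen_def setsFs Bpre[OF that] ..
  have muSTi: "mu_ST M sg tu Y (space Ms) (B i) = c i" if "i < n" for i
    unfolding mu_ST_def c_def rect using that by simp
  have LHS: "(\<Sum>i. \<integral>\<omega>. indicator (rect_event M sg tu (space Ms) (B i)) \<omega> *
                   (mu_st M Ms Mt sg tu Y \<omega> - mu_sT M Mt tu sg Y (space Ms) \<omega>)\<^sup>2 \<partial>M)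
      = (\<integral>\<omega>. (\<mu>st \<omega> - \<mu>t \<omega>)\<^sup>2 \<partial>M)"
  proof -
    have "(\<Sum>i. \<integral>\<omega>. indicator (rect_event M sg tu (space Ms) (B i)) \<omega> *
                   (mu_st M Ms Mt sg tu Y \<omega> - mu_sT M Mt tu sg Y (space Ms) \<omega>)\<^sup>2 \<partial>M)
        = (\<Sum>i<n. \<integral>\<omega>. indicator (rect_event M sg tu (space Ms) (B i)) \<omega> *
                   (mu_st M Ms Mt sg tu Y \<omega> - mu_sT M Mt tu sg Y (space Ms) \<omega>)\<^sup>2 \<partial>M)"
      by (rule suminf_finite) (auto simp: rect)
    also have "\<dots> = (\<Sum>i<n. \<integral>\<omega>. indicator (E i) \<omega> * (\<mu>st \<omega> - \<mu>t \<omega>)\<^sup>2 \<partial>M)"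
      by (intro sum.cong refl) (simp add: rect muT0 \<mu>st_def)
    also have "\<dots> = (\<integral>\<omega>. (\<mu>st \<omega> - \<mu>t \<omega>)\<^sup>2 \<partial>M)"
      by (rule sum_partition[OF finite_measure_axioms EM Eone]) (auto intro!: ib bdd_power2 bdd_diff b\<mu>st b\<mu>t)
    finally show ?thesis .
  qed
  have RHS: "(\<Sum>i. \<integral>\<omega>. indicator (rect_event M sg tu (space Ms) (B i)) \<omega> *
                   (mu_sT M Ms sg tu Y (B i) \<omega> - mu_ST M sg tu Y (space Ms) (B i))\<^sup>2 \<partial>M)
      = (\<Sum>i<n. \<integral>\<omega>. indicator (E i) \<omega> * (Z i \<omega> - c i)\<^sup>2 \<partial>M)"
  proof -
    have "(\<Sum>i. \<integral>\<omega>. indicator (rect_event M sg tu (space Ms) (B i)) \<omega> *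
                   (mu_sT M Ms sg tu Y (B i) \<omega> - mu_ST M sg tu Y (space Ms) (B i))\<^sup>2 \<partial>M)
        = (\<Sum>i<n. \<integral>\<omega>. indicator (rect_event M sg tu (space Ms) (B i)) \<omega> *
                   (mu_sT M Ms sg tu Y (B i) \<omega> - mu_ST M sg tu Y (space Ms) (B i))\<^sup>2 \<partial>M)"
      by (rule suminf_finite) (auto simp: rect)
    also have "\<dots> = (\<Sum>i<n. \<integral>\<omega>. indicator (E i) \<omega> * (Z i \<omega> - c i)\<^sup>2 \<partial>M)"
      by (intro sum.cong refl) (simp add: rect muTi muSTi)
    finally show ?thesis .
  qed
  have blk: "(\<integral>\<omega>. indicator (E i) \<omega> * (Z i \<omega> - c i)\<^sup>2 \<partial>M)
     \<le> (\<integral>x. \<bar>indicator (E i) x - indicator (G i) x\<bar> \<partial>M) + (\<integral>x. \<mu>s x * indicator (E i) x * Y x \<partial>M)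
        - (\<integral>x. indicator (E i) x * \<mu>t x * Y x \<partial>M) + w\<^sup>2 * measure M (E i)" for i
  proof -
    have pb: "(\<integral>\<omega>. indicator (E i) \<omega> * (Z i \<omega> - c i)\<^sup>2 \<partial>M)
     \<le> (\<integral>x. \<bar>indicator (E i) x - indicator (G i) x\<bar> \<partial>M) + (\<integral>x. \<mu>s x * indicator (E i) x * Y x \<partial>M) - (c i)\<^sup>2 * measure M (E i)"
      using per_block[OF M subs Ym Yb EM GFs, of i i] unfolding Z_def c_def \<mu>s_def' .
    have bnd: "AE x in M. x \<in> E i \<longrightarrow> lo i \<le> real_cond_exp M Ft Y x \<and> real_cond_exp M Ft Y x \<le> lo i + w"
      using \<mu>tB
    proof eventually_elim
      case (elim x)
      show ?case
      proof
        assume "x \<in> E i"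
        then have "idx (\<mu>t x) = i" unfolding E_def by simp
        then show "lo i \<le> real_cond_exp M Ft Y x \<and> real_cond_exp M Ft Y x \<le> lo i + w"
          using lo[of "\<mu>t x"] elim unfolding \<mu>t_def' by auto
      qed
    qed
    have bk: "(\<integral>x. indicator (E i) x * \<mu>t x * Y x \<partial>M) - (c i)\<^sup>2 * measure M (E i) \<le> w\<^sup>2 * measure M (E i)"
      using bucket[OF M subt Ym Yb EFt bnd] unfolding c_def \<mu>t_def' .
    show ?thesis using pb bk by linarith
  qed
  define D where "D = {\<omega>\<in>space M. idx (\<mu>t \<omega>) \<noteq> idx (\<mu>s \<omega>)}"
  have "D = (\<Union>j<n. E j - G j)" unfolding D_def E_def G_def using idxn by auto
  then have DM[measurable]: "D \<in> sets M" by auto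
  have s1: "(\<Sum>i<n. \<integral>x. \<bar>indicator (E i) x - indicator (G i) x\<bar> \<partial>M) = 2 * measure M D"
  proof -
    have "(\<Sum>i<n. \<integral>x. \<bar>indicator (E i) x - indicator (G i) x :: real\<bar> \<partial>M)
        = (\<integral>x. (\<Sum>i<n. \<bar>indicator (E i) x - indicator (G i) x :: real\<bar>) \<partial>M)"
    proof (rule Bochner_Integration.integral_sum[symmetric])
      fix i assume "i \<in> {..<n}"
      have "bdd M (\<lambda>x. \<bar>indicator (E i) x - indicator (G i) x :: real\<bar>)"
        by (intro bdd_abs bdd_diff bdd_indicator EM GM)
      then show "integrable M (\<lambda>x. \<bar>indicator (E i) x - indicator (G i) x :: real\<bar>)" by (rule ib)
    qed
    also have "\<dots> = (\<integral>x. (2 * indicator D x :: real) \<partial>M)"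
    proof (intro Bochner_Integration.integral_cong refl)
      fix x assume x: "x \<in> space M"
      have "(\<Sum>i<n. \<bar>indicator (E i) x - indicator (G i) x :: real\<bar>)
          = (\<Sum>i<n. \<bar>(if idx (\<mu>t x) = i then 1 else 0) - (if idx (\<mu>s x) = i then 1 else (0::real))\<bar>)"
        using x unfolding E_def G_def by (intro sum.cong refl) (simp add: indicator_def)
      also have "\<dots> = (if idx (\<mu>t x) = idx (\<mu>s x) then 0 else 2)"
        by (rule sum_abs_diff_delta[OF idxn idxn])
      also have "\<dots> = 2 * indicator D x" using x unfolding D_def by (simp add: indicator_def)
      finally show "(\<Sum>i<n. \<bar>indicator (E i) x - indicator (G i) x\<bar>) = (2 * indicator D x :: real)" .
    qed
    also have "\<dots> = 2 * measure M D" by simp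
    finally show ?thesis .
  qed
  have s2: "(\<Sum>i<n. \<integral>x. \<mu>s x * indicator (E i) x * Y x \<partial>M) = (\<integral>x. \<mu>s x * Y x \<partial>M)"
  proof -
    have "(\<Sum>i<n. \<integral>x. \<mu>s x * indicator (E i) x * Y x \<partial>M) = (\<Sum>i<n. \<integral>x. indicator (E i) x * (\<mu>s x * Y x) \<partial>M)"
      by (simp add: mult_ac)
    also have "\<dots> = (\<integral>x. \<mu>s x * Y x \<partial>M)"
      by (rule sum_partition[OF finite_measure_axioms EM Eone]) (auto intro!: ib bdd_mult b\<mu>s bY)
    finally show ?thesis .
  qed
  have s3: "(\<Sum>i<n. \<integral>x. indicator (E i) x * \<mu>t x * Y x \<partial>M) = (\<integral>x. \<mu>t x * Y x \<partial>M)"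
  proof -
    have "(\<Sum>i<n. \<integral>x. indicator (E i) x * \<mu>t x * Y x \<partial>M) = (\<Sum>i<n. \<integral>x. indicator (E i) x * (\<mu>t x * Y x) \<partial>M)"
      by (simp add: mult_ac)
    also have "\<dots> = (\<integral>x. \<mu>t x * Y x \<partial>M)"
      by (rule sum_partition[OF finite_measure_axioms EM Eone]) (auto intro!: ib bdd_mult b\<mu>t bY)
    finally show ?thesis .
  qed
  have s4: "(\<Sum>i<n. measure M (E i)) = 1"
  proof -
    have "(\<Sum>i<n. measure M (E i)) = (\<Sum>i<n. \<integral>x. indicator (E i) x * 1 \<partial>M)"
      by simp
    also have "\<dots> = (\<integral>x. 1 \<partial>M)"
      by (rule sum_partition[OF finite_measure_axioms EM Eone]) auto
    also have "\<dots> = 1" by (simp add: prob_space)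
    finally show ?thesis .
  qed
  have s5: "(\<integral>x. \<mu>s x * Y x \<partial>M) - (\<integral>x. \<mu>t x * Y x \<partial>M) \<le> (\<integral>x. \<bar>\<mu>s x - \<mu>t x\<bar> \<partial>M)"
  proof -
    have "(\<integral>x. \<mu>s x * Y x \<partial>M) - (\<integral>x. \<mu>t x * Y x \<partial>M) = (\<integral>x. (\<mu>s x - \<mu>t x) * Y x \<partial>M)"
      by (subst Bochner_Integration.integral_diff[symmetric]) (auto intro!: ib bdd_mult b\<mu>s b\<mu>t bY simp: algebra_simps)
    also have "\<dots> \<le> (\<integral>x. \<bar>\<mu>s x - \<mu>t x\<bar> \<partial>M)"
    proof (rule integral_mono)
      fix x assume x: "x \<in> space M"
      have "(\<mu>s x - \<mu>t x) * Y x \<le> \<bar>(\<mu>s x - \<mu>t x) * Y x\<bar>" by simp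
      also have "\<dots> \<le> \<bar>\<mu>s x - \<mu>t x\<bar>" using Yb[OF x] by (simp add: abs_mult mult_left_le)
      finally show "(\<mu>s x - \<mu>t x) * Y x \<le> \<bar>\<mu>s x - \<mu>t x\<bar>" .
    qed (auto intro!: ib bdd_mult bdd_abs bdd_diff b\<mu>s b\<mu>t bY)
    finally show ?thesis .
  qed
  have "(\<Sum>i<n. \<integral>\<omega>. indicator (E i) \<omega> * (Z i \<omega> - c i)\<^sup>2 \<partial>M)
     \<le> (\<Sum>i<n. (\<integral>x. \<bar>indicator (E i) x - indicator (G i) x\<bar> \<partial>M) + (\<integral>x. \<mu>s x * indicator (E i) x * Y x \<partial>M)
        - (\<integral>x. indicator (E i) x * \<mu>t x * Y x \<partial>M) + w\<^sup>2 * measure M (E i))"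
    by (rule sum_mono) (rule blk)
  also have "\<dots> = 2 * measure M D + (\<integral>x. \<mu>s x * Y x \<partial>M) - (\<integral>x. \<mu>t x * Y x \<partial>M) + w\<^sup>2"
    by (simp add: sum.distrib sum_subtractf sum_distrib_left[symmetric] s1 s2 s3 s4)
  finally have "(\<Sum>i<n. \<integral>\<omega>. indicator (E i) \<omega> * (Z i \<omega> - c i)\<^sup>2 \<partial>M)
      \<le> 2 * measure M D + (\<integral>x. \<bar>\<mu>s x - \<mu>t x\<bar> \<partial>M) + w\<^sup>2" using s5 by linarith
  then show ?thesis using S LHS RHS unfolding D_def \<mu>st_def \<mu>s_def \<mu>t_def by linarith
qed

lemma div_step:
  fixes q N :: int assumes N: "0 < N" and ne: "(q - 1) div N \<noteq> q div N"
  shows "q mod N = 0"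
proof (rule ccontr)
  assume r: "q mod N \<noteq> 0"
  have q: "q = N * (q div N) + q mod N" by simp
  have r1: "1 \<le> q mod N" "q mod N < N" using r N pos_mod_sign[OF N, of q] pos_mod_bound[OF N, of q] by auto
  have e: "q - 1 = (q mod N - 1) + (q div N) * N" using q by (simp add: algebra_simps)
  have "(q - 1) div N = ((q mod N - 1) + (q div N) * N) div N" using arg_cong[OF e, of "\<lambda>t. t div N"] .
  also have "\<dots> = (q mod N - 1) div N + q div N" using N by (subst div_mult_self1) auto
  finally have "(q - 1) div N = (q mod N - 1) div N + q div N" .
  also have "(q mod N - 1) div N = 0" using r1 by (simp add: div_pos_pos_trivial)
  finally show False using ne by simp
qed

lemma card_step:
  assumes N: "0 < N"
  shows "card {k. k < N \<and> (m - int k) div int N \<noteq> (m + 1 - int k) div int N} \<le> 1"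
proof -
  let ?A = "{k. k < N \<and> (m - int k) div int N \<noteq> (m + 1 - int k) div int N}"
  have "(m + 1 - int k) mod int N = 0" if "k \<in> ?A" for k
    using that div_step[of "int N" "m + 1 - int k"] N by auto
  then have "k1 = k2" if "k1 \<in> ?A" "k2 \<in> ?A" for k1 k2
  proof -
    have "(m + 1 - int k1) mod int N = 0" "(m + 1 - int k2) mod int N = 0"
      using that \<open>\<And>k. k \<in> ?A \<Longrightarrow> _\<close> by auto
    then have "int k1 mod int N = int k2 mod int N"
      by (metis mod_0_imp_dvd mod_eq_dvd_iff diff_diff_eq2 diff_diff_cancel minus_diff_eq dvd_minus_iff)
    moreover have "k1 < N" "k2 < N" using that by auto
    ultimately show ?thesis by (simp add: zmod_int[symmetric])
  qed
  then show ?thesis by (simp add: card_le_Suc0_iff_eq)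
qed

lemma card_diff:
  assumes N: "0 < N"
  shows "card {k. k < N \<and> (a - int k) div int N \<noteq> (a + int d - int k) div int N} \<le> d"
proof (induction d)
  case 0 then show ?case by simp
next
  case (Suc d)
  let ?f = "\<lambda>t k. (t - int k) div int N"
  have sub: "{k. k < N \<and> ?f a k \<noteq> ?f (a + int (Suc d)) k}
      \<subseteq> {k. k < N \<and> ?f a k \<noteq> ?f (a + int d) k} \<union> {k. k < N \<and> ?f (a + int d) k \<noteq> ?f (a + int d + 1) k}"
    by (auto simp: algebra_simps)
  have "card {k. k < N \<and> ?f a k \<noteq> ?f (a + int (Suc d)) k}
      \<le> card ({k. k < N \<and> ?f a k \<noteq> ?f (a + int d) k} \<union> {k. k < N \<and> ?f (a + int d) k \<noteq> ?f (a + int d + 1) k})"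
    by (rule card_mono[OF _ sub]) auto
  also have "\<dots> \<le> card {k. k < N \<and> ?f a k \<noteq> ?f (a + int d) k} + card {k. k < N \<and> ?f (a + int d) k \<noteq> ?f (a + int d + 1) k}"
    by (rule card_Un_le)
  also have "\<dots> \<le> d + 1" using Suc.IH card_step[OF N, of "a + int d"] by simp
  finally show ?case by simp
qed

lemma card_abs:
  assumes N: "0 < N"
  shows "card {k. k < N \<and> (a - int k) div int N \<noteq> (b - int k) div int N} \<le> \<bar>a - b\<bar>"
proof (cases "a \<le> b")
  case True
  have "b = a + int (nat (b - a))" using True by simp
  then have "card {k. k < N \<and> (a - int k) div int N \<noteq> (b - int k) div int N} \<le> nat (b - a)"
    using card_diff[OF N, of a "nat (b - a)"] by simp
  then show ?thesis using True by linarith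
next
  case False
  have "a = b + int (nat (a - b))" using False by simp
  then have "card {k. k < N \<and> (b - int k) div int N \<noteq> (a - int k) div int N} \<le> nat (a - b)"
    using card_diff[OF N, of b "nat (a - b)"] by simp
  moreover have "{k. k < N \<and> (b - int k) div int N \<noteq> (a - int k) div int N} = {k. k < N \<and> (a - int k) div int N \<noteq> (b - int k) div int N}"
    by auto
  ultimately have "card {k. k < N \<and> (a - int k) div int N \<noteq> (b - int k) div int N} \<le> nat (a - b)"
    by simp
  then show ?thesis using False by linarith
qed

lemma floor_diff_le: fixes x y h :: real assumes "0 < h"
  shows "real_of_int \<bar>\<lfloor>x / h\<rfloor> - \<lfloor>y / h\<rfloor>\<bar> \<le> \<bar>x - y\<bar> / h + 1"
proof -
  have "\<bar>x / h - y / h\<bar> = \<bar>x - y\<bar> / h" using assms by (simp add: diff_divide_distrib[symmetric])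
  moreover have "real_of_int \<bar>\<lfloor>x / h\<rfloor> - \<lfloor>y / h\<rfloor>\<bar> \<le> \<bar>x / h - y / h\<bar> + 1"
    by (smt (verit, best) floor_le_iff le_floor_iff of_int_abs of_int_diff of_int_floor_le real_of_int_floor_add_one_gt)
  ultimately show ?thesis by simp
qed

lemma grid_idx:
  fixes w :: real and N k :: nat
  assumes w: "0 < w" and N: "0 < N" and k: "k < N"
  defines "h \<equiv> w / real N"
  defines "n \<equiv> nat (\<lfloor>1/h\<rfloor> div int N) + 2"
  defines "idx \<equiv> \<lambda>x. min (n - 1) (nat ((\<lfloor>x/h\<rfloor> - int k) div int N + 1))"
  defines "lo \<equiv> \<lambda>i::nat. real_of_int ((int i - 1) * int N + int k) * h"
  shows "idx \<in> borel \<rightarrow>\<^sub>M count_space UNIV" "\<And>x. idx x < n" "0 < n"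
    "\<And>x. 0 \<le> x \<Longrightarrow> x \<le> 1 \<Longrightarrow> lo (idx x) \<le> x \<and> x \<le> lo (idx x) + w"
    "\<And>x y. idx x \<noteq> idx y \<Longrightarrow> (\<lfloor>x/h\<rfloor> - int k) div int N \<noteq> (\<lfloor>y/h\<rfloor> - int k) div int N"
proof -
  have h: "0 < h" unfolding h_def using w N by simp
  have Nh: "real N * h = w" unfolding h_def using N by simp
  show "idx \<in> borel \<rightarrow>\<^sub>M count_space UNIV" unfolding idx_def by measurable
  show "0 < n" unfolding n_def by simp
  then show "\<And>x. idx x < n" unfolding idx_def by auto
  show "\<And>x y. idx x \<noteq> idx y \<Longrightarrow> (\<lfloor>x/h\<rfloor> - int k) div int N \<noteq> (\<lfloor>y/h\<rfloor> - int k) div int N"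
    unfolding idx_def by auto
  fix x :: real assume x0: "0 \<le> x" and x1: "x \<le> 1"
  define F where "F = \<lfloor>x/h\<rfloor>"
  define m where "m = (F - int k) div int N"
  have F0: "0 \<le> F" unfolding F_def using x0 h by simp
  have F1: "F \<le> \<lfloor>1/h\<rfloor>" unfolding F_def using x1 h by (intro floor_mono) (simp add: divide_right_mono)
  have "- int N \<le> F - int k" using F0 k by simp
  then have "(- int N) div int N \<le> m" unfolding m_def using N by (intro zdiv_mono1) auto
  moreover have "(- int N) div int N = -1" using N by (simp add: zdiv_zminus1_eq_if)
  ultimately have m1: "-1 \<le> m" by simp
  have "m \<le> \<lfloor>1/h\<rfloor> div int N" unfolding m_def using F1 N by (intro zdiv_mono1) auto
  then have "nat (m + 1) \<le> n - 1" unfolding n_def by linarith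
  then have idxx: "idx x = nat (m + 1)" unfolding idx_def m_def F_def by simp
  have loid: "lo (idx x) = real_of_int (m * int N + int k) * h"
    unfolding lo_def idxx using m1 by simp
  have dm: "F - int k = m * int N + (F - int k) mod int N" unfolding m_def by simp
  have r: "0 \<le> (F - int k) mod int N" "(F - int k) mod int N < int N" using N by auto
  have A: "m * int N + int k \<le> F" using dm r by linarith
  have B: "F + 1 \<le> m * int N + int k + int N" using dm r by linarith
  have "real_of_int F \<le> x / h" unfolding F_def by simp
  then have Fx: "real_of_int F * h \<le> x" using h by (simp add: pos_le_divide_eq)
  have "x / h < real_of_int F + 1" unfolding F_def by simp
  then have xF: "x < (real_of_int F + 1) * h" using h by (simp add: pos_divide_less_eq)
  have "real_of_int (m * int N + int k) * h \<le> real_of_int F * h"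
  proof (rule mult_right_mono)
    show "real_of_int (m * int N + int k) \<le> real_of_int F" using A by (simp only: of_int_le_iff)
  qed (use h in simp)
  then have c1: "lo (idx x) \<le> x" using Fx loid by linarith
  have "(real_of_int F + 1) * h \<le> real_of_int (m * int N + int k + int N) * h"
  proof (rule mult_right_mono)
    have "real_of_int (F + 1) \<le> real_of_int (m * int N + int k + int N)" using B by (simp only: of_int_le_iff)
    then show "real_of_int F + 1 \<le> real_of_int (m * int N + int k + int N)" by simp
  qed (use h in simp)
  also have "\<dots> = real_of_int (m * int N + int k) * h + real N * h" by (simp add: algebra_simps)
  finally have "x \<le> lo (idx x) + w" using xF loid Nh by linarith
  then show "lo (idx x) \<le> x \<and> x \<le> lo (idx x) + w" using c1 by simp
qed

lemma avg_bound:
  fixes M :: "'a measure" and Ms :: "'s measure" and Mt :: "'t measure"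
    and sg :: "'a \<Rightarrow> 's" and tu :: "'a \<Rightarrow> 't" and Y :: "'a \<Rightarrow> real" and \<delta> w :: real and N :: nat
  assumes info: "info_structure M Ms Mt sg tu Y"
    and sub: "approx_rect_subst M Ms Mt sg tu Y \<delta>"
    and w: "0 < w" and N: "0 < N"
  shows "(\<integral>\<omega>. (mu_st M Ms Mt sg tu Y \<omega> - mu_s M Mt tu Y \<omega>)\<^sup>2 \<partial>M)
     \<le> \<delta> + (\<integral>\<omega>. \<bar>mu_s M Ms sg Y \<omega> - mu_s M Mt tu Y \<omega>\<bar> \<partial>M) + w\<^sup>2
        + 2 * (\<integral>\<omega>. \<bar>mu_s M Ms sg Y \<omega> - mu_s M Mt tu Y \<omega>\<bar> \<partial>M) / w + 2 / real N"
proof -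
  have M: "prob_space M" and sgm[measurable]: "sg \<in> M \<rightarrow>\<^sub>M Ms" and tum[measurable]: "tu \<in> M \<rightarrow>\<^sub>M Mt"
    and Ym[measurable]: "Y \<in> borel_measurable M" and Yb: "\<And>x. x\<in>space M \<Longrightarrow> 0 \<le> Y x \<and> Y x \<le> 1"
    using info unfolding info_structure_def by auto
  interpret prob_space M by fact
  have ib: "integrable M h" if "bdd M h" for h using that bdd_integrable[of M h] finite_measure_axioms by blast
  define \<mu>s where "\<mu>s = mu_s M Ms sg Y"
  define \<mu>t where "\<mu>t = mu_s M Mt tu Y"
  define T where "T = (\<integral>\<omega>. (mu_st M Ms Mt sg tu Y \<omega> - mu_s M Mt tu Y \<omega>)\<^sup>2 \<partial>M)"
  define D where "D = (\<integral>\<omega>. \<bar>\<mu>s \<omega> - \<mu>t \<omega>\<bar> \<partial>M)"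
  have iY: "integrable M Y" by (rule integrable_const_bound[where B=1]) (auto simp: Yb abs_le_iff)
  have subs: "subalgebra M (sig_gen M (preimgs M sg Ms))" by (rule subalg_sig_gen[OF preimgs_sets[OF sgm]])
  have subt: "subalgebra M (sig_gen M (preimgs M tu Mt))" by (rule subalg_sig_gen[OF preimgs_sets[OF tum]])
  interpret Fs: finite_measure_subalgebra M "sig_gen M (preimgs M sg Ms)" by unfold_locales (rule subs)
  interpret Ft: finite_measure_subalgebra M "sig_gen M (preimgs M tu Mt)" by unfold_locales (rule subt)
  have i\<mu>s: "integrable M \<mu>s" unfolding \<mu>s_def mu_s_def by (rule Fs.real_cond_exp_int(1)[OF iY])
  have i\<mu>t: "integrable M \<mu>t" unfolding \<mu>t_def mu_s_def by (rule Ft.real_cond_exp_int(1)[OF iY])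
  have \<mu>sM[measurable]: "\<mu>s \<in> borel_measurable M" unfolding \<mu>s_def mu_s_def by measurable
  have \<mu>tM[measurable]: "\<mu>t \<in> borel_measurable M" unfolding \<mu>t_def mu_s_def by measurable
  define h where "h = w / real N"
  define n where "n = nat (\<lfloor>1/h\<rfloor> div int N) + 2"
  define idx where "idx k = (\<lambda>x. min (n - 1) (nat ((\<lfloor>x/h\<rfloor> - int k) div int N + 1)))" for k :: nat
  define lo where "lo k = (\<lambda>i::nat. real_of_int ((int i - 1) * int N + int k) * h)" for k :: nat
  define A where "A k = {\<omega>\<in>space M. idx k (\<mu>t \<omega>) \<noteq> idx k (\<mu>s \<omega>)}" for k
  have hpos: "0 < h" unfolding h_def using w N by simp
  have idxm[measurable]: "idx k \<in> borel \<rightarrow>\<^sub>M count_space UNIV" for k unfolding idx_def by measurable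
  have AM[measurable]: "A k \<in> sets M" if k: "k < N" for k
  proof -
    have lt: "idx k x < n" for x using grid_idx(2)[OF w N k] unfolding idx_def h_def n_def by simp
    have "A k = (\<Union>j<n. {\<omega>\<in>space M. idx k (\<mu>t \<omega>) = j} - {\<omega>\<in>space M. idx k (\<mu>s \<omega>) = j})"
      unfolding A_def using lt by auto
    also have "\<dots> \<in> sets M" by measurable
    finally show ?thesis .
  qed
  have Tk: "T \<le> \<delta> + 2 * measure M (A k) + D + w\<^sup>2" if k: "k < N" for k
  proof -
    note g = grid_idx[OF w N k]
    have "T \<le> \<delta> + 2 * measure M {\<omega>\<in>space M. idx k (mu_s M Mt tu Y \<omega>) \<noteq> idx k (mu_s M Ms sg Y \<omega>)}
        + (\<integral>\<omega>. \<bar>mu_s M Ms sg Y \<omega> - mu_s M Mt tu Y \<omega>\<bar> \<partial>M) + w\<^sup>2"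
      unfolding T_def
      by (rule main_bound[OF info sub, where n=n and idx="idx k" and lo="lo k" and w=w])
         (use g w in \<open>simp_all add: idx_def lo_def h_def n_def\<close>)
    then show ?thesis unfolding A_def D_def \<mu>s_def \<mu>t_def .
  qed
  have sumA: "(\<Sum>k<N. measure M (A k)) \<le> D / h + 1"
  proof -
    have "(\<Sum>k<N. measure M (A k)) = (\<integral>\<omega>. (\<Sum>k<N. indicator (A k) \<omega>) \<partial>M)"
      by (subst Bochner_Integration.integral_sum) (auto intro!: ib bdd_indicator)
    also have "\<dots> \<le> (\<integral>\<omega>. \<bar>\<mu>s \<omega> - \<mu>t \<omega>\<bar> / h + 1 \<partial>M)"
    proof (rule integral_mono)
      fix \<omega> assume \<omega>: "\<omega> \<in> space M"
      have "(\<Sum>k<N. indicator (A k) \<omega>) = real (card ({..<N} \<inter> {k. \<omega> \<in> A k}))"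
        by (simp add: indicator_def)
      also have "card ({..<N} \<inter> {k. \<omega> \<in> A k})
          \<le> card {k. k < N \<and> (\<lfloor>\<mu>t \<omega>/h\<rfloor> - int k) div int N \<noteq> (\<lfloor>\<mu>s \<omega>/h\<rfloor> - int k) div int N}"
        using grid_idx(5)[OF w N] \<omega> unfolding A_def idx_def h_def n_def
        by (intro card_mono) auto
      then have "real (card ({..<N} \<inter> {k. \<omega> \<in> A k}))
          \<le> real_of_int \<bar>\<lfloor>\<mu>t \<omega>/h\<rfloor> - \<lfloor>\<mu>s \<omega>/h\<rfloor>\<bar>"
        using card_abs[OF N, of "\<lfloor>\<mu>t \<omega>/h\<rfloor>" "\<lfloor>\<mu>s \<omega>/h\<rfloor>"]
        by (metis (no_types, lifting) of_int_le_iff of_int_of_nat_eq order_trans of_nat_mono)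
      also have "\<dots> \<le> \<bar>\<mu>t \<omega> - \<mu>s \<omega>\<bar> / h + 1" by (rule floor_diff_le[OF hpos])
      finally show "(\<Sum>k<N. indicator (A k) \<omega>) \<le> \<bar>\<mu>s \<omega> - \<mu>t \<omega>\<bar> / h + 1" by (simp add: abs_minus_commute)
    next
      show "integrable M (\<lambda>\<omega>. \<Sum>k<N. indicator (A k) \<omega> :: real)"
        by (intro Bochner_Integration.integrable_sum) (auto intro!: ib bdd_indicator AM)
    next
      have "integrable M (\<lambda>\<omega>. \<bar>\<mu>s \<omega> - \<mu>t \<omega>\<bar>)" using i\<mu>s i\<mu>t by auto
      then show "integrable M (\<lambda>\<omega>. \<bar>\<mu>s \<omega> - \<mu>t \<omega>\<bar> / h + 1)" by auto
    qed
    also have "\<dots> = D / h + 1" unfolding D_def using i\<mu>s i\<mu>t by (simp add: prob_space)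
    finally show ?thesis .
  qed
  have "real N * T = (\<Sum>k<N. T)" by simp
  also have "\<dots> \<le> (\<Sum>k<N. (\<delta> + D + w\<^sup>2) + 2 * measure M (A k))"
    by (rule sum_mono) (use Tk in \<open>simp add: algebra_simps\<close>)
  also have "\<dots> = real N * (\<delta> + D + w\<^sup>2) + 2 * (\<Sum>k<N. measure M (A k))"
    by (simp add: sum.distrib sum_distrib_left)
  finally have NT0: "real N * T \<le> real N * (\<delta> + D + w\<^sup>2) + 2 * (\<Sum>k<N. measure M (A k))" .
  have "2 * (\<Sum>k<N. measure M (A k)) \<le> 2 * (D / h + 1)" using sumA by simp
  from order_trans[OF NT0 add_left_mono[OF this]]
  have NT: "real N * T \<le> real N * (\<delta> + D + w\<^sup>2) + 2 * (D / h + 1)" .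
  have Dh: "D / h = real N * (D / w)" unfolding h_def using N by simp
  have "real N * T \<le> real N * (\<delta> + D + w\<^sup>2 + 2 * D / w + 2 / real N)"
    using NT N unfolding Dh by (simp add: algebra_simps)
  then have "T \<le> \<delta> + D + w\<^sup>2 + 2 * D / w + 2 / real N" using N by simp
  then show ?thesis unfolding T_def D_def \<mu>s_def \<mu>t_def .
qed

lemma final_arith:
  fixes T D \<epsilon> \<delta> :: real
  assumes e0: "0 \<le> \<epsilon>" and e1: "\<epsilon> \<le> 1" and D0: "0 \<le> D"
    and Dt: "\<And>t. 0 < t \<Longrightarrow> D \<le> \<epsilon> / (2 * t) + t / 2"
    and TB: "\<And>w N. 0 < w \<Longrightarrow> 0 < N \<Longrightarrow> T \<le> \<delta> + D + w\<^sup>2 + 2 * D / w + 2 / real N"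
  shows "T \<le> 6 * \<epsilon> powr (1/3) + \<delta>"
proof (cases "\<epsilon> = 0")
  case True
  have "D \<le> 0"
  proof (rule ccontr)
    assume "\<not> D \<le> 0"
    then have "0 < D" by simp
    with Dt[OF this] True show False by simp
  qed
  then have D: "D = 0" using D0 by simp
  have "T \<le> \<delta>"
  proof (rule ccontr)
    assume "\<not> T \<le> \<delta>"
    then have e: "0 < T - \<delta>" by simp
    define w where "w = sqrt ((T - \<delta>) / 4)"
    define N where "N = nat \<lceil>4 / (T - \<delta>)\<rceil> + 1"
    have w: "0 < w" unfolding w_def using e by simp
    have w2: "w\<^sup>2 = (T - \<delta>) / 4" unfolding w_def using e by simp
    have N: "0 < N" unfolding N_def by simp
    have "4 / (T - \<delta>) < real N" unfolding N_def by linarith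
    then have "4 < real N * (T - \<delta>)" using e by (simp add: divide_less_eq)
    then have h2: "2 / real N < (T - \<delta>) / 2" using N by (simp add: divide_less_eq field_simps)
    have "T \<le> \<delta> + D + w\<^sup>2 + 2 * D / w + 2 / real N" by (rule TB[OF w N])
    then have "T \<le> \<delta> + (T - \<delta>) / 4 + 2 / real N" using D w2 by simp
    moreover have "False" if "T \<le> \<delta> + (T - \<delta>) / 4 + x" "x < (T - \<delta>) / 2" for x :: real
      using that e by (simp add: field_simps)
    ultimately show False using h2 by blast
  qed
  then show ?thesis using True by simp
next
  case False
  then have e: "0 < \<epsilon>" using e0 by simp
  define u where "u = \<epsilon> powr (1/6)"
  have u0: "0 < u" unfolding u_def using e by simp
  have u1: "u \<le> 1" unfolding u_def using e e1 by (simp add: powr_le1)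
  have pw: "u ^ k = \<epsilon> powr (real k / 6)" for k
    unfolding u_def using e by (simp add: powr_realpow[symmetric] powr_powr)
  have u6: "u ^ 6 = \<epsilon>" using pw[of 6] e by simp
  have u2: "u\<^sup>2 = \<epsilon> powr (1/3)" using pw[of 2] by simp
  have u3: "0 < u ^ 3" using u0 by simp
  have "D \<le> \<epsilon> / (2 * u ^ 3) + u ^ 3 / 2" by (rule Dt[OF u3])
  also have "\<epsilon> / (2 * u ^ 3) = u ^ 3 / 2" unfolding u6[symmetric] using u0 by (simp add: field_simps power_add[symmetric])
  finally have Du: "D \<le> u ^ 3" by simp
  have u32: "u ^ 3 \<le> u\<^sup>2" using u0 u1 by (simp add: power_decreasing)
  define N where "N = nat \<lceil>2 / u\<^sup>2\<rceil> + 1"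
  have N: "0 < N" unfolding N_def by simp
  have "2 / u\<^sup>2 < real N" unfolding N_def by linarith
  then have "2 < real N * u\<^sup>2" using u0 by (simp add: divide_less_eq)
  then have Nu: "2 / real N \<le> u\<^sup>2" using N by (simp add: divide_le_eq mult.commute)
  have "2 * D / u \<le> 2 * u\<^sup>2"
  proof -
    have "2 * D \<le> 2 * u ^ 3" using Du by simp
    then have "2 * D / u \<le> 2 * u ^ 3 / u" using u0 by (simp add: divide_right_mono)
    also have "\<dots> = 2 * u\<^sup>2" using u0 by (simp add: power_eq_if)
    finally show ?thesis .
  qed
  have TB': "T \<le> \<delta> + D + u\<^sup>2 + 2 * D / u + 2 / real N" by (rule TB[OF u0 N])
  have lin: "\<And>x y. T \<le> \<delta> + D + u\<^sup>2 + x + y \<Longrightarrow> x \<le> 2 * u\<^sup>2 \<Longrightarrow> y \<le> u\<^sup>2 \<Longrightarrow> T \<le> \<delta> + u\<^sup>2 + u\<^sup>2 + 2 * u\<^sup>2 + u\<^sup>2"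
    using Du u32 by linarith
  from lin[OF TB' \<open>2 * D / u \<le> 2 * u\<^sup>2\<close> Nu]
  have "T \<le> \<delta> + u\<^sup>2 + u\<^sup>2 + 2 * u\<^sup>2 + u\<^sup>2" .
  then show ?thesis using u2 u0 by (simp add: algebra_simps) (smt (verit) zero_le_power2)
qed

theorem lemma3p10:
  fixes M :: "'a measure" and Ms :: "'s measure" and Mt :: "'t measure"
    and sg :: "'a \<Rightarrow> 's" and tu :: "'a \<Rightarrow> 't" and Y :: "'a \<Rightarrow> real" and \<delta> \<epsilon> :: real
  assumes "info_structure M Ms Mt sg tu Y"
    and "approx_rect_subst M Ms Mt sg tu Y \<delta>"
    and "\<epsilon> = (\<integral>\<omega>. (mu_s M Ms sg Y \<omega> - mu_s M Mt tu Y \<omega>)\<^sup>2 \<partial>M)"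
  shows "(\<integral>\<omega>. (mu_st M Ms Mt sg tu Y \<omega> - mu_s M Mt tu Y \<omega>)\<^sup>2 \<partial>M) \<le> 6 * \<epsilon> powr (1/3) + \<delta>"
proof -
  note info = assms(1) and sub = assms(2) and edef = assms(3)
  have M: "prob_space M" and sgm[measurable]: "sg \<in> M \<rightarrow>\<^sub>M Ms" and tum[measurable]: "tu \<in> M \<rightarrow>\<^sub>M Mt"
    and Ym[measurable]: "Y \<in> borel_measurable M" and Yb: "\<And>x. x\<in>space M \<Longrightarrow> 0 \<le> Y x \<and> Y x \<le> 1"
    using info unfolding info_structure_def by auto
  interpret prob_space M by fact
  have ib: "integrable M h" if "bdd M h" for h using that bdd_integrable[of M h] finite_measure_axioms by blast
  have iY: "integrable M Y" by (rule integrable_const_bound[where B=1]) (auto simp: Yb abs_le_iff)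
  define Fs where "Fs = sig_gen M (preimgs M sg Ms)"
  define Ft where "Ft = sig_gen M (preimgs M tu Mt)"
  have subs: "subalgebra M Fs" unfolding Fs_def by (rule subalg_sig_gen[OF preimgs_sets[OF sgm]])
  have subt: "subalgebra M Ft" unfolding Ft_def by (rule subalg_sig_gen[OF preimgs_sets[OF tum]])
  interpret Fs: finite_measure_subalgebra M Fs by unfold_locales (rule subs)
  interpret Ft: finite_measure_subalgebra M Ft by unfold_locales (rule subt)
  define \<mu>s where "\<mu>s = mu_s M Ms sg Y"
  define \<mu>t where "\<mu>t = mu_s M Mt tu Y"
  have \<mu>s_def': "\<mu>s = real_cond_exp M Fs Y" unfolding \<mu>s_def mu_s_def Fs_def ..
  have \<mu>t_def': "\<mu>t = real_cond_exp M Ft Y" unfolding \<mu>t_def mu_s_def Ft_def ..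
  have \<mu>sM[measurable]: "\<mu>s \<in> borel_measurable M" unfolding \<mu>s_def' by measurable
  have \<mu>tM[measurable]: "\<mu>t \<in> borel_measurable M" unfolding \<mu>t_def' by measurable
  have \<mu>sB: "AE x in M. 0 \<le> \<mu>s x \<and> \<mu>s x \<le> 1"
  proof -
    have "AE x in M. 0 \<le> \<mu>s x" unfolding \<mu>s_def' by (rule Fs.real_cond_exp_pos) (auto simp: Yb)
    moreover have "AE x in M. \<mu>s x \<le> 1" unfolding \<mu>s_def' by (rule Fs.real_cond_exp_le_c) (auto simp: Yb iY)
    ultimately show ?thesis by auto
  qed
  have \<mu>tB: "AE x in M. 0 \<le> \<mu>t x \<and> \<mu>t x \<le> 1"
  proof -
    have "AE x in M. 0 \<le> \<mu>t x" unfolding \<mu>t_def' by (rule Ft.real_cond_exp_pos) (auto simp: Yb)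
    moreover have "AE x in M. \<mu>t x \<le> 1" unfolding \<mu>t_def' by (rule Ft.real_cond_exp_le_c) (auto simp: Yb iY)
    ultimately show ?thesis by auto
  qed
  have b\<mu>s: "bdd M \<mu>s" by (rule bdd_01[OF \<mu>sM \<mu>sB])
  have b\<mu>t: "bdd M \<mu>t" by (rule bdd_01[OF \<mu>tM \<mu>tB])
  define D where "D = (\<integral>\<omega>. \<bar>\<mu>s \<omega> - \<mu>t \<omega>\<bar> \<partial>M)"
  have e: "\<epsilon> = (\<integral>\<omega>. (\<mu>s \<omega> - \<mu>t \<omega>)\<^sup>2 \<partial>M)" unfolding edef \<mu>s_def \<mu>t_def ..
  have i2: "integrable M (\<lambda>\<omega>. (\<mu>s \<omega> - \<mu>t \<omega>)\<^sup>2)" by (intro ib bdd_power2 bdd_diff b\<mu>s b\<mu>t)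
  have i1: "integrable M (\<lambda>\<omega>. \<bar>\<mu>s \<omega> - \<mu>t \<omega>\<bar>)" by (intro ib bdd_abs bdd_diff b\<mu>s b\<mu>t)
  have e0: "0 \<le> \<epsilon>" unfolding e by (rule integral_nonneg_AE) auto
  have e1: "\<epsilon> \<le> 1"
  proof -
    have "\<epsilon> \<le> (\<integral>\<omega>. 1 \<partial>M)" unfolding e
    proof (rule integral_mono_AE[OF i2])
      show "AE x in M. (\<mu>s x - \<mu>t x)\<^sup>2 \<le> 1" using \<mu>sB \<mu>tB
      proof eventually_elim
        case (elim x)
        then have "\<bar>\<mu>s x - \<mu>t x\<bar> \<le> 1" by auto
        then show ?case by (metis abs_le_square_iff power_one abs_one)
      qed
    qed auto
    then show ?thesis by (simp add: prob_space)
  qed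
  have D0: "0 \<le> D" unfolding D_def by (rule integral_nonneg_AE) auto
  have Dt: "D \<le> \<epsilon> / (2 * t) + t / 2" if t: "0 < t" for t
  proof -
    have "D \<le> (\<integral>\<omega>. (\<mu>s \<omega> - \<mu>t \<omega>)\<^sup>2 / (2 * t) + t / 2 \<partial>M)" unfolding D_def
    proof (rule integral_mono[OF i1])
      show "integrable M (\<lambda>\<omega>. (\<mu>s \<omega> - \<mu>t \<omega>)\<^sup>2 / (2 * t) + t / 2)" using i2 by auto
      fix x
      have "0 \<le> (\<bar>\<mu>s x - \<mu>t x\<bar> - t)\<^sup>2" by simp
      then have "2 * t * \<bar>\<mu>s x - \<mu>t x\<bar> \<le> (\<mu>s x - \<mu>t x)\<^sup>2 + t\<^sup>2"
        by (simp add: power2_eq_square algebra_simps)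
      then show "\<bar>\<mu>s x - \<mu>t x\<bar> \<le> (\<mu>s x - \<mu>t x)\<^sup>2 / (2 * t) + t / 2"
        using t by (simp add: field_simps power2_eq_square)
    qed
    also have "\<dots> = \<epsilon> / (2 * t) + t / 2" unfolding e using i2 by (simp add: prob_space)
    finally show ?thesis .
  qed
  have TB: "(\<integral>\<omega>. (mu_st M Ms Mt sg tu Y \<omega> - mu_s M Mt tu Y \<omega>)\<^sup>2 \<partial>M) \<le> \<delta> + D + w\<^sup>2 + 2 * D / w + 2 / real N"
    if "0 < w" "0 < N" for w N
    using avg_bound[OF info sub that] unfolding D_def \<mu>s_def \<mu>t_def .
  show ?thesis by (rule final_arith[OF e0 e1 D0 Dt TB])
qed

end
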